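(* Let $0<\epsilon<\frac{\sqrt2}{2}$ be a constant. There is a constant $c>0$ such that the following holds for every function $m=m(n)\ge 0$. Consider the fraction of matrices $\mathbf M\in\mathrm{GL}(n,2)$ with the following property: every $n$-qubit $m$-ancilla quantum circuit that $\epsilon$-approximates the CNOT circuit $\mathbf M$ has depth at least $$c\cdot\max\left\{\log n,\ \frac{n^2}{(n+m)\log(n+m)}\right\}.$$ This fraction tends to $1$ as $n\to\infty$.
   Context: Quantum circuits here consist of arbitrary single-qubit and two-qubit unitary gates. The depth of a circuit is the number of layers, where each layer consists of gates acting on pairwise disjoint qubits. A matrix $\mathbf M\in\mathrm{GL}(n,2)$ is identified with the $n$-qubit CNOT circuit $\mathcal C_1$ acting by $|\mathbf x\rangle\mapsto|\mathbf M\mathbf x\rangle$ on computational basis states. An $n$-qubit $m$-ancilla quantum circuit $\mathcal C_2$ is a circuit on $n+m$ qubits. It $\epsilon$-approximates $\mathcal C_1$ if for every $\mathbf x\in\{0,1\}^n$ two conditions hold: - $\mathcal C_2|\mathbf x\rangle|0\rangle^{\otimes m}=|\varphi_{\mathbf x}\rangle|0\rangle^{\otimes m}$ for some unit vector $|\varphi_{\mathbf x}\rangle\in\mathbb C^{2^n}$; - $\||\varphi_{\mathbf x}\rangle-\mathcal C_1|\mathbf x\rangle\|_2<\epsilon$. Logarithms are base 2. *)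

theory Defs
  imports Complex_Main "HOL-Library.Z2" "Jordan_Normal_Form.Matrix" "Jordan_Normal_Form.Schur_Decomposition"
begin

definition GL2 :: "nat \<Rightarrow> bit mat set" where
  "GL2 n = {M \<in> carrier_mat n n. invertible_mat M}"

(* Computational basis encoding: qubit i corresponds to bit i of the basis index. *)
definition bidx :: "bit vec \<Rightarrow> nat" where
  "bidx x = (\<Sum>i<dim_vec x. if x $ i = 1 then 2 ^ i else 0)"

definition vnorm :: "complex vec \<Rightarrow> real" where
  "vnorm v = sqrt (\<Sum>i<dim_vec v. (cmod (v $ i))\<^sup>2)"

definition unitary_mat :: "nat \<Rightarrow> complex mat \<Rightarrow> bool" where
  "unitary_mat d U \<longleftrightarrow> U \<in> carrier_mat d d \<and> U * mat_adjoint U = 1\<^sub>m d \<and> mat_adjoint U * U = 1\<^sub>m d"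

(* G is a unitary on N qubits of the form U (x) Id, where U acts on the qubits in Q *)
definition gate_on :: "nat \<Rightarrow> nat set \<Rightarrow> complex mat \<Rightarrow> bool" where
  "gate_on N Q G \<longleftrightarrow> Q \<subseteq> {..<N} \<and> (card Q = 1 \<or> card Q = 2) \<and> unitary_mat (2 ^ N) G \<and>
     (\<exists>g. \<forall>x<2 ^ N. \<forall>y<2 ^ N. G $$ (x, y) =
        (if \<forall>i<N. i \<notin> Q \<longrightarrow> bit x i = bit y i
         then g (\<lambda>i. i \<in> Q \<and> bit x i) (\<lambda>i. i \<in> Q \<and> bit y i) else 0))"

definition is_layer :: "nat \<Rightarrow> (nat set \<times> complex mat) list \<Rightarrow> bool" where
  "is_layer N L \<longleftrightarrow> (\<forall>(Q, G) \<in> set L. gate_on N Q G) \<and>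
     (\<forall>i<length L. \<forall>j<length L. i \<noteq> j \<longrightarrow> fst (L ! i) \<inter> fst (L ! j) = {})"

definition layer_op :: "nat \<Rightarrow> (nat set \<times> complex mat) list \<Rightarrow> complex mat" where
  "layer_op N L = foldr (\<lambda>(Q, G) acc. G * acc) L (1\<^sub>m (2 ^ N))"

definition is_circuit :: "nat \<Rightarrow> (nat set \<times> complex mat) list list \<Rightarrow> bool" where
  "is_circuit N C \<longleftrightarrow> (\<forall>L \<in> set C. is_layer N L)"

(* first layer of the list is applied first *)
definition circuit_op :: "nat \<Rightarrow> (nat set \<times> complex mat) list list \<Rightarrow> complex mat" where
  "circuit_op N C = foldl (\<lambda>acc L. layer_op N L * acc) (1\<^sub>m (2 ^ N)) C"

definition depth :: "(nat set \<times> complex mat) list list \<Rightarrow> nat" where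
  "depth C = length C"

(* C is an n-qubit m-ancilla circuit that eps-approximates the CNOT circuit M;
   data qubits 0..n-1, ancillas n..n+m-1 *)
definition approximates :: "nat \<Rightarrow> nat \<Rightarrow> real \<Rightarrow> (nat set \<times> complex mat) list list \<Rightarrow> bit mat \<Rightarrow> bool" where
  "approximates n m eps C M \<longleftrightarrow> is_circuit (n + m) C \<and>
     (\<forall>x \<in> carrier_vec n. \<exists>\<phi> \<in> carrier_vec (2 ^ n). vnorm \<phi> = 1 \<and>
        circuit_op (n + m) C *\<^sub>v unit_vec (2 ^ (n + m)) (bidx x)
          = vec (2 ^ (n + m)) (\<lambda>j. if j < 2 ^ n then \<phi> $ j else 0) \<and>
        vnorm (\<phi> - unit_vec (2 ^ n) (bidx (M *\<^sub>v x))) < eps)"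

end

theory Submission
  imports Defs "HOL-Analysis.L2_Norm" "HOL-Analysis.Convex" "HOL-Real_Asymp.Real_Asymp"
begin


definition mk :: "nat \<Rightarrow> (nat \<Rightarrow> bool) \<Rightarrow> nat" where
  "mk N f = horner_sum of_bool 2 (map f [0..<N])"

lemma bit_mk: "bit (mk N f) i \<longleftrightarrow> i < N \<and> f i"
  unfolding mk_def by (auto simp: bit_horner_sum_bit_iff)

lemma mk_less: "mk N f < 2 ^ N"
  unfolding mk_def using horner_sum_of_bool_2_less[of "map f [0..<N]"] by simp

lemma mk_bits: "(x::nat) < 2 ^ N \<Longrightarrow> mk N (bit x) = x"
  unfolding mk_def horner_sum_bit_eq_take_bit by (simp add: take_bit_nat_eq_self_iff)

lemma mk_cong: "(\<And>i. i < N \<Longrightarrow> f i = g i) \<Longrightarrow> mk N f = mk N g"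
  unfolding mk_def by (intro arg_cong[where f="horner_sum of_bool 2"] map_cong) auto

lemma nat_bits_eq: "(x::nat) < 2 ^ N \<Longrightarrow> y < 2 ^ N \<Longrightarrow> (\<And>i. i < N \<Longrightarrow> bit x i = bit y i) \<Longrightarrow> x = y"
proof -
  assume a: "x < 2 ^ N" "y < 2 ^ N" and b: "\<And>i. i < N \<Longrightarrow> bit x i = bit y i"
  have "x = mk N (bit x)" using mk_bits[OF a(1)] by (rule sym)
  also have "\<dots> = mk N (bit y)" by (rule mk_cong) (rule b)
  also have "\<dots> = y" by (rule mk_bits[OF a(2)])
  finally show ?thesis .
qed

lemma bit_ge: "(x::nat) < 2 ^ N \<Longrightarrow> N \<le> i \<Longrightarrow> \<not> bit x i"
proof
  assume a: "x < 2 ^ N" "N \<le> i" "bit x i"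
  then have "bit (mk N (bit x)) i" using mk_bits[OF a(1)] by (simp only:)
  then show False using bit_mk[of N "bit x" i] a(2) by linarith
qed

lemma mk_bit_eq: "x < 2 ^ N \<Longrightarrow> (\<And>i. i < N \<Longrightarrow> f i = bit x i) \<Longrightarrow> mk N f = x"
proof -
  assume a: "x < 2 ^ N" "\<And>i. i < N \<Longrightarrow> f i = bit x i"
  have "mk N f = mk N (bit x)" by (rule mk_cong) (rule a(2))
  then show ?thesis using mk_bits[OF a(1)] by (simp only:)
qed
lemma vnorm_L2: "vnorm v = L2_set (\<lambda>i. cmod (v $ i)) {..<dim_vec v}"
  unfolding vnorm_def L2_set_def by simp

lemma vnorm_sq: "(vnorm v)\<^sup>2 = (\<Sum>i<dim_vec v. (cmod (v $ i))\<^sup>2)"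
  unfolding vnorm_def by (simp add: sum_nonneg)

lemma vnorm_nonneg: "vnorm v \<ge> 0"
  unfolding vnorm_def by (simp add: sum_nonneg)

lemma vnorm_add: "dim_vec w = dim_vec v \<Longrightarrow> vnorm (v + w) \<le> vnorm v + vnorm w"
proof -
  assume d: "dim_vec w = dim_vec v"
  have "vnorm (v + w) = L2_set (\<lambda>i. cmod (v $ i + w $ i)) {..<dim_vec v}"
    unfolding vnorm_L2 using d by (intro L2_set_cong) auto
  also have "\<dots> \<le> L2_set (\<lambda>i. cmod (v $ i) + cmod (w $ i)) {..<dim_vec v}"
    by (intro L2_set_mono) (auto simp: norm_triangle_ineq)
  also have "\<dots> \<le> vnorm v + vnorm w"
    unfolding vnorm_L2 using d by (simp add: L2_set_triangle_ineq)
  finally show ?thesis .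
qed

lemma vnorm_diff: "dim_vec w = dim_vec v \<Longrightarrow> dim_vec u = dim_vec v \<Longrightarrow>
   vnorm (u - w) \<le> vnorm (u - v) + vnorm (v - w)"
proof -
  assume d: "dim_vec w = dim_vec v" "dim_vec u = dim_vec v"
  have "u - w = (u - v) + (v - w)"
    using d by (intro eq_vecI) auto
  then show ?thesis using vnorm_add[of "v - w" "u - v"] d by simp
qed

lemma vnorm_minus_comm: "dim_vec w = dim_vec v \<Longrightarrow> vnorm (v - w) = vnorm (w - v)"
proof -
  assume d: "dim_vec w = dim_vec v"
  have "(\<Sum>i<dim_vec (v - w). (cmod ((v - w) $ i))\<^sup>2) = (\<Sum>i<dim_vec (w - v). (cmod ((w - v) $ i))\<^sup>2)"
    using d by (intro sum.cong) (auto intro: arg_cong[where f="\<lambda>x. x^2"] norm_minus_commute)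
  then show ?thesis unfolding vnorm_def by simp
qed

lemma index_mat_adjoint:
  "i < dim_col A \<Longrightarrow> j < dim_row A \<Longrightarrow> mat_adjoint A $$ (i, j) = cnj (A $$ (j, i))"
  "dim_row (mat_adjoint A) = dim_col A" "dim_col (mat_adjoint A) = dim_row A"
  unfolding mat_adjoint_def mat_of_rows_def by (auto simp: cols_def)

lemma mat_adjoint_carrier: "(A::complex mat) \<in> carrier_mat n k \<Longrightarrow> mat_adjoint A \<in> carrier_mat k n"
  using index_mat_adjoint(2,3)[of A] unfolding carrier_mat_def by auto

lemma unitary_col_orth:
  assumes "unitary_mat d U" "k < d" "j < d"
  shows "(\<Sum>i<d. cnj (U $$ (i, k)) * U $$ (i, j)) = (if k = j then 1 else 0)"
proof -
  have U: "U \<in> carrier_mat d d" and h: "mat_adjoint U * U = 1\<^sub>m d"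
    using assms(1) unfolding unitary_mat_def by auto
  have dr: "dim_row U = d" "dim_col U = d" using U by auto
  have "(mat_adjoint U * U) $$ (k, j) = row (mat_adjoint U) k \<bullet> col U j"
    by (rule index_mult_mat(1)) (simp_all add: index_mat_adjoint dr assms)
  also have "\<dots> = (\<Sum>i\<in>{0..<d}. row (mat_adjoint U) k $ i * col U j $ i)"
    unfolding scalar_prod_def by (simp add: dr)
  also have "\<dots> = (\<Sum>i<d. cnj (U $$ (i, k)) * U $$ (i, j))"
    by (intro sum.cong) (auto simp: index_mat_adjoint dr assms)
  finally show ?thesis using h assms by simp
qed

lemma mult_mat_vec_sum:
  "A \<in> carrier_mat n k \<Longrightarrow> v \<in> carrier_vec k \<Longrightarrow> i < n \<Longrightarrow> (A *\<^sub>v v) $ i = (\<Sum>j<k. A $$ (i, j) * v $ j)"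
proof -
  assume a: "A \<in> carrier_mat n k" "v \<in> carrier_vec k" "i < n"
  then have "(A *\<^sub>v v) $ i = row A i \<bullet> v" by simp
  also have "\<dots> = (\<Sum>j<k. A $$ (i, j) * v $ j)"
    unfolding scalar_prod_def using a by (auto simp: atLeast0LessThan intro!: sum.cong)
  finally show ?thesis .
qed

lemma unitary_norm:
  assumes "unitary_mat d U" "v \<in> carrier_vec d"
  shows "vnorm (U *\<^sub>v v) = vnorm v"
proof -
  have U: "U \<in> carrier_mat d d" using assms(1) unfolding unitary_mat_def by auto
  have e: "(U *\<^sub>v v) $ i = (\<Sum>j<d. U $$ (i, j) * v $ j)" if "i < d" for i
    by (rule mult_mat_vec_sum[OF U assms(2) that])
  have dU: "dim_vec (U *\<^sub>v v) = d" using U by simp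
  have dv: "dim_vec v = d" using assms(2) by simp
  have "complex_of_real ((vnorm (U *\<^sub>v v))\<^sup>2) = (\<Sum>i<d. (U *\<^sub>v v) $ i * cnj ((U *\<^sub>v v) $ i))"
    unfolding vnorm_sq dU by (simp only: of_real_sum complex_norm_square)
  also have "\<dots> = (\<Sum>i<d. (\<Sum>j<d. U $$ (i, j) * v $ j) * (\<Sum>k<d. cnj (U $$ (i, k)) * cnj (v $ k)))"
    by (intro sum.cong refl) (simp add: e)
  also have "\<dots> = (\<Sum>i<d. \<Sum>j<d. \<Sum>k<d. v $ j * cnj (v $ k) * (cnj (U $$ (i, k)) * U $$ (i, j)))"
    by (intro sum.cong refl) (simp add: sum_product mult.commute mult.left_commute)
  also have "\<dots> = (\<Sum>j<d. \<Sum>i<d. \<Sum>k<d. v $ j * cnj (v $ k) * (cnj (U $$ (i, k)) * U $$ (i, j)))"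
    by (rule sum.swap)
  also have "\<dots> = (\<Sum>j<d. \<Sum>k<d. \<Sum>i<d. v $ j * cnj (v $ k) * (cnj (U $$ (i, k)) * U $$ (i, j)))"
    by (rule sum.cong[OF refl], rule sum.swap)
  also have "\<dots> = (\<Sum>j<d. \<Sum>k<d. v $ j * cnj (v $ k) * (\<Sum>i<d. cnj (U $$ (i, k)) * U $$ (i, j)))"
    by (intro sum.cong refl) (simp add: sum_distrib_left)
  also have "\<dots> = (\<Sum>j<d. \<Sum>k<d. v $ j * cnj (v $ k) * (if k = j then 1 else 0))"
    by (intro sum.cong refl) (simp add: unitary_col_orth[OF assms(1)])
  also have "\<dots> = (\<Sum>j<d. v $ j * cnj (v $ j))"
    by (intro sum.cong refl) (simp add: if_distrib sum.delta cong: if_cong)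
  also have "\<dots> = complex_of_real ((vnorm v)\<^sup>2)"
    unfolding vnorm_sq dv by (simp only: of_real_sum complex_norm_square)
  finally have "(vnorm (U *\<^sub>v v))\<^sup>2 = (vnorm v)\<^sup>2" using of_real_eq_iff by blast
  then show ?thesis using vnorm_nonneg[of v] vnorm_nonneg[of "U *\<^sub>v v"] by (simp add: power2_eq_iff_nonneg)
qed


lemma sparse_bound:
  fixes E :: "complex mat"
  assumes E: "E \<in> carrier_mat d d" and v: "v \<in> carrier_vec d"
    and z: "\<And>x y. x < d \<Longrightarrow> y < d \<Longrightarrow> \<not> R x y \<Longrightarrow> E $$ (x, y) = 0"
    and b: "\<And>x y. x < d \<Longrightarrow> y < d \<Longrightarrow> cmod (E $$ (x, y)) \<le> \<delta>"
    and sym: "\<And>x y. R x y \<Longrightarrow> R y x"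
    and c: "\<And>x. x < d \<Longrightarrow> card {y. y < d \<and> R x y} \<le> K"
    and dpos: "\<delta> \<ge> 0"
  shows "vnorm (E *\<^sub>v v) \<le> real K * \<delta> * vnorm v"
proof -
  define A where "A x = {y. y < d \<and> R x y}" for x
  have finA: "finite (A x)" for x unfolding A_def by simp
  have AL: "A x \<subseteq> {..<d}" for x unfolding A_def by auto
  have ent: "(E *\<^sub>v v) $ x = (\<Sum>y\<in>A x. E $$ (x, y) * v $ y)" if x: "x < d" for x
  proof -
    have "(E *\<^sub>v v) $ x = (\<Sum>y<d. E $$ (x, y) * v $ y)" by (rule mult_mat_vec_sum[OF E v x])
    also have "\<dots> = (\<Sum>y\<in>A x. E $$ (x, y) * v $ y)"
      by (rule sum.mono_neutral_right) (auto simp: A_def z x)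
    finally show ?thesis .
  qed
  have bx: "(cmod ((E *\<^sub>v v) $ x))\<^sup>2 \<le> real K * \<delta>\<^sup>2 * (\<Sum>y\<in>A x. (cmod (v $ y))\<^sup>2)" if x: "x < d" for x
  proof -
    have "cmod ((E *\<^sub>v v) $ x) \<le> (\<Sum>y\<in>A x. cmod (E $$ (x, y) * v $ y))"
      unfolding ent[OF x] by (rule norm_sum)
    also have "\<dots> \<le> (\<Sum>y\<in>A x. \<delta> * cmod (v $ y))"
      by (intro sum_mono) (auto simp: norm_mult A_def intro!: mult_right_mono b x)
    finally have h1: "cmod ((E *\<^sub>v v) $ x) \<le> (\<Sum>y\<in>A x. \<delta> * cmod (v $ y))" .
    have "(cmod ((E *\<^sub>v v) $ x))\<^sup>2 \<le> (\<Sum>y\<in>A x. \<delta> * cmod (v $ y))\<^sup>2"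
      by (rule power_mono[OF h1]) simp
    also have "\<dots> \<le> (\<Sum>y\<in>A x. (\<delta> * cmod (v $ y))\<^sup>2) * card (A x)"
      by (rule sum_squared_le_sum_of_squares)
    also have "\<dots> \<le> (\<Sum>y\<in>A x. (\<delta> * cmod (v $ y))\<^sup>2) * K"
      by (intro mult_left_mono) (auto simp: A_def c x sum_nonneg)
    also have "\<dots> = real K * \<delta>\<^sup>2 * (\<Sum>y\<in>A x. (cmod (v $ y))\<^sup>2)"
      by (simp add: power_mult_distrib sum_distrib_left mult_ac)
    finally show ?thesis .
  qed
  have dE: "dim_vec (E *\<^sub>v v) = d" using E by simp
  have dv: "dim_vec v = d" using v by simp
  have swap: "(\<Sum>x<d. \<Sum>y\<in>A x. (cmod (v $ y))\<^sup>2) = (\<Sum>y<d. (cmod (v $ y))\<^sup>2 * card (A y))"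
  proof -
    have "(\<Sum>x<d. \<Sum>y\<in>A x. (cmod (v $ y))\<^sup>2) = (\<Sum>x<d. \<Sum>y<d. if R x y then (cmod (v $ y))\<^sup>2 else 0)"
    proof (rule sum.cong[OF refl])
      fix x
      have "A x = {y \<in> {..<d}. R x y}" by (auto simp: A_def)
      then show "(\<Sum>y\<in>A x. (cmod (v $ y))\<^sup>2) = (\<Sum>y<d. if R x y then (cmod (v $ y))\<^sup>2 else 0)"
        by (simp only: sum.inter_filter[OF finite_lessThan])
    qed
    also have "\<dots> = (\<Sum>y<d. \<Sum>x<d. if R x y then (cmod (v $ y))\<^sup>2 else 0)"
      by (rule sum.swap)
    also have "\<dots> = (\<Sum>y<d. (cmod (v $ y))\<^sup>2 * card (A y))"
    proof (rule sum.cong[OF refl])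
      fix y assume "y \<in> {..<d}"
      have "(\<Sum>x<d. if R x y then (cmod (v $ y))\<^sup>2 else 0) = (\<Sum>x\<in>{x \<in> {..<d}. R x y}. (cmod (v $ y))\<^sup>2)"
        by (simp only: sum.inter_filter[OF finite_lessThan])
      also have "{x \<in> {..<d}. R x y} = A y" unfolding A_def using sym by blast
      finally show "(\<Sum>x<d. if R x y then (cmod (v $ y))\<^sup>2 else 0) = (cmod (v $ y))\<^sup>2 * card (A y)"
        by simp
    qed
    finally show ?thesis .
  qed
  have "(vnorm (E *\<^sub>v v))\<^sup>2 = (\<Sum>x<d. (cmod ((E *\<^sub>v v) $ x))\<^sup>2)"
    unfolding vnorm_sq dE ..
  also have "\<dots> \<le> (\<Sum>x<d. real K * \<delta>\<^sup>2 * (\<Sum>y\<in>A x. (cmod (v $ y))\<^sup>2))"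
    by (intro sum_mono bx) simp
  also have "\<dots> = real K * \<delta>\<^sup>2 * (\<Sum>y<d. (cmod (v $ y))\<^sup>2 * card (A y))"
    by (simp add: sum_distrib_left[symmetric] swap)
  also have "\<dots> \<le> real K * \<delta>\<^sup>2 * (\<Sum>y<d. (cmod (v $ y))\<^sup>2 * K)"
    by (intro mult_left_mono sum_mono) (auto simp: A_def c)
  also have "\<dots> = real K * \<delta>\<^sup>2 * ((\<Sum>y<d. (cmod (v $ y))\<^sup>2) * K)"
    by (simp only: sum_distrib_right)
  also have "\<dots> = real K * \<delta>\<^sup>2 * ((vnorm v)\<^sup>2 * K)"
    by (simp only: vnorm_sq dv)
  also have "\<dots> = (real K * \<delta> * vnorm v)\<^sup>2"
    by (simp add: power2_eq_square)
  finally have "(vnorm (E *\<^sub>v v))\<^sup>2 \<le> (real K * \<delta> * vnorm v)\<^sup>2" .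
  then show ?thesis
    by (rule power2_le_imp_le) (simp add: dpos vnorm_nonneg)
qed


definition prodl :: "nat \<Rightarrow> complex mat list \<Rightarrow> complex mat" where
  "prodl D xs = foldr (*) xs (1\<^sub>m D)"

lemma prodl_Nil[simp]: "prodl D [] = 1\<^sub>m D" unfolding prodl_def by simp
lemma prodl_Cons[simp]: "prodl D (A # xs) = A * prodl D xs" unfolding prodl_def by simp

lemma prodl_carrier: "set xs \<subseteq> carrier_mat D D \<Longrightarrow> prodl D xs \<in> carrier_mat D D"
  by (induction xs) auto

lemma prodl_append: "set xs \<subseteq> carrier_mat D D \<Longrightarrow> set ys \<subseteq> carrier_mat D D \<Longrightarrow>
  prodl D (xs @ ys) = prodl D xs * prodl D ys"
proof (induction xs)
  case Nil
  then show ?case using prodl_carrier[of ys D] by simp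
next
  case (Cons a xs)
  have a: "a \<in> carrier_mat D D" and xs: "set xs \<subseteq> carrier_mat D D" using Cons.prems by auto
  have "prodl D ((a # xs) @ ys) = a * (prodl D xs * prodl D ys)" using Cons.IH[OF xs Cons.prems(2)] by simp
  also have "\<dots> = (a * prodl D xs) * prodl D ys"
    using assoc_mult_mat[OF a prodl_carrier[OF xs] prodl_carrier[OF Cons.prems(2)]] by simp
  finally show ?case by simp
qed

lemma vnorm_minus_le: "dim_vec y = dim_vec x \<Longrightarrow> vnorm (x - y) \<le> vnorm x + vnorm y"
proof -
  assume d: "dim_vec y = dim_vec x"
  have "vnorm (x - y) \<le> vnorm (x - 0\<^sub>v (dim_vec x)) + vnorm (0\<^sub>v (dim_vec x) - y)"
    by (rule vnorm_diff) (simp_all add: d)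
  also have "x - 0\<^sub>v (dim_vec x) = x" by (intro eq_vecI) auto
  also have "vnorm (0\<^sub>v (dim_vec x) - y) = vnorm y"
    unfolding vnorm_def using d by (auto intro!: arg_cong[where f=sqrt] sum.cong)
  finally show ?thesis .
qed

definition good_pair :: "nat \<Rightarrow> real \<Rightarrow> complex mat \<Rightarrow> complex mat \<Rightarrow> bool" where
  "good_pair D \<beta> A B \<longleftrightarrow> A \<in> carrier_mat D D \<and> B \<in> carrier_mat D D \<and>
     (\<forall>v\<in>carrier_vec D. vnorm (A *\<^sub>v v) \<le> vnorm v \<and> vnorm ((A - B) *\<^sub>v v) \<le> \<beta> * vnorm v)"

lemma good_pair_B:
  fixes \<beta> :: real
  assumes "good_pair D \<beta> A B" "v \<in> carrier_vec D"
  shows "vnorm (B *\<^sub>v v) \<le> (1 + \<beta>) * vnorm v"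
proof -
  have A: "A \<in> carrier_mat D D" and B: "B \<in> carrier_mat D D" using assms unfolding good_pair_def by auto
  have "B *\<^sub>v v = A *\<^sub>v v - (A - B) *\<^sub>v v"
    using A B assms(2) by (intro eq_vecI) (auto simp: minus_mult_distrib_mat_vec[OF A B assms(2)])
  then have "vnorm (B *\<^sub>v v) \<le> vnorm (A *\<^sub>v v) + vnorm ((A - B) *\<^sub>v v)"
    using A B by (simp add: vnorm_minus_le)
  also have "\<dots> \<le> vnorm v + \<beta> * vnorm v" using assms unfolding good_pair_def by (intro add_mono) auto
  finally show ?thesis by (simp add: algebra_simps)
qed

lemma prodl_norm_le:
  fixes \<beta> :: real
  assumes "list_all2 (good_pair D \<beta>) As Bs" "v \<in> carrier_vec D"
  shows "vnorm (prodl D As *\<^sub>v v) \<le> vnorm v"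
  using assms
proof (induction As Bs arbitrary: v rule: list_all2_induct)
  case Nil
  then show ?case by simp
next
  case (Cons A As B Bs)
  have A: "A \<in> carrier_mat D D" using Cons unfolding good_pair_def by auto
  have P: "prodl D As \<in> carrier_mat D D"
    using Cons(2) by (intro prodl_carrier) (auto simp: list_all2_conv_all_nth set_conv_nth good_pair_def)
  have "prodl D (A # As) *\<^sub>v v = A *\<^sub>v (prodl D As *\<^sub>v v)"
    using A P Cons.prems by simp
  also have "vnorm \<dots> \<le> vnorm (prodl D As *\<^sub>v v)"
    using Cons(1) P Cons.prems unfolding good_pair_def by (meson mult_mat_vec_carrier)
  also have "\<dots> \<le> vnorm v" using Cons by simp
  finally show ?case .
qed

lemma perturb:
  fixes \<beta> :: real
  assumes "list_all2 (good_pair D \<beta>) As Bs" "v \<in> carrier_vec D" "\<beta> \<ge> 0"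
  shows "vnorm (prodl D As *\<^sub>v v - prodl D Bs *\<^sub>v v) \<le> length As * \<beta> * (1 + \<beta>) ^ length As * vnorm v"
  using assms
proof (induction As Bs arbitrary: v rule: list_all2_induct)
  case Nil
  have "vnorm (v - v) = 0" unfolding vnorm_def by simp
  then show ?case using Nil by simp
next
  case (Cons A As B Bs)
  have A: "A \<in> carrier_mat D D" and B: "B \<in> carrier_mat D D" using Cons unfolding good_pair_def by auto
  have sA: "set As \<subseteq> carrier_mat D D" and sB: "set Bs \<subseteq> carrier_mat D D"
    using Cons(2) by (auto simp: list_all2_conv_all_nth set_conv_nth good_pair_def)
  have PA: "prodl D As \<in> carrier_mat D D" using sA by (rule prodl_carrier)
  have PB: "prodl D Bs \<in> carrier_mat D D" using sB by (rule prodl_carrier)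
  define w where "w = prodl D As *\<^sub>v v"
  define u where "u = prodl D Bs *\<^sub>v v"
  have w: "w \<in> carrier_vec D" and u: "u \<in> carrier_vec D" using PA PB Cons.prems unfolding w_def u_def by auto
  have e1: "prodl D (A # As) *\<^sub>v v = A *\<^sub>v w" using A PA Cons.prems unfolding w_def by simp
  have e2: "prodl D (B # Bs) *\<^sub>v v = B *\<^sub>v u" using B PB Cons.prems unfolding u_def by simp
  have "vnorm (A *\<^sub>v w - B *\<^sub>v u) \<le> vnorm (A *\<^sub>v w - B *\<^sub>v w) + vnorm (B *\<^sub>v w - B *\<^sub>v u)"
    using A B w u by (intro vnorm_diff) auto
  also have "A *\<^sub>v w - B *\<^sub>v w = (A - B) *\<^sub>v w" using minus_mult_distrib_mat_vec[OF A B w] by simp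
  also have "B *\<^sub>v w - B *\<^sub>v u = B *\<^sub>v (w - u)" using mult_minus_distrib_mat_vec[OF B w u] by simp
  also have "vnorm ((A - B) *\<^sub>v w) \<le> \<beta> * vnorm w" using Cons(1) w unfolding good_pair_def by auto
  also have "\<beta> * vnorm w \<le> \<beta> * vnorm v"
    using prodl_norm_le[OF Cons(2) Cons.prems(1)] Cons.prems(2) unfolding w_def by (intro mult_left_mono) auto
  also have "vnorm (B *\<^sub>v (w - u)) \<le> (1 + \<beta>) * vnorm (w - u)"
    using good_pair_B[OF Cons(1)] w u by auto
  also have "vnorm (w - u) \<le> length As * \<beta> * (1 + \<beta>) ^ length As * vnorm v"
    unfolding w_def u_def by (rule Cons.IH[OF Cons.prems])
  finally have "vnorm (A *\<^sub>v w - B *\<^sub>v u) \<le> \<beta> * vnorm v + (1 + \<beta>) * (length As * \<beta> * (1 + \<beta>) ^ length As * vnorm v)"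
    using Cons.prems(2) by (simp add: mult_left_mono)
  also have "\<dots> \<le> length (A # As) * \<beta> * (1 + \<beta>) ^ length (A # As) * vnorm v"
  proof -
    have o: "1 \<le> (1 + \<beta>) ^ length (A # As)" using Cons.prems(2) by (intro one_le_power) simp
    have "\<beta> * vnorm v \<le> \<beta> * (1 + \<beta>) ^ length (A # As) * vnorm v"
    proof -
      have "\<beta> * 1 \<le> \<beta> * (1 + \<beta>) ^ length (A # As)" using o Cons.prems(2) by (rule mult_left_mono)
      then show ?thesis using vnorm_nonneg[of v] by (intro mult_right_mono) auto
    qed
    then show ?thesis by (simp add: algebra_simps)
  qed
  finally show ?case using e1 e2 by simp
qed


definition rndr :: "real \<Rightarrow> int \<Rightarrow> real \<Rightarrow> real" where
  "rndr \<delta> k r = \<delta> * of_int (max (-k) (min k \<lfloor>r / \<delta>\<rfloor>))"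

definition rnd :: "real \<Rightarrow> int \<Rightarrow> complex \<Rightarrow> complex" where
  "rnd \<delta> k z = Complex (rndr \<delta> k (Re z)) (rndr \<delta> k (Im z))"

definition grid :: "real \<Rightarrow> int \<Rightarrow> complex set" where
  "grid \<delta> k = (\<lambda>(a, b). Complex (\<delta> * of_int a) (\<delta> * of_int b)) ` ({-k..k} \<times> {-k..k})"

definition rnd_mat :: "real \<Rightarrow> int \<Rightarrow> complex mat \<Rightarrow> complex mat" where
  "rnd_mat \<delta> k G = mat (dim_row G) (dim_col G) (\<lambda>ij. rnd \<delta> k (G $$ ij))"

lemma rnd_in_grid: "0 \<le> k \<Longrightarrow> rnd \<delta> k z \<in> grid \<delta> k"
  unfolding rnd_def grid_def rndr_def by (rule image_eqI[where x="(max (-k) (min k \<lfloor>Re z / \<delta>\<rfloor>), max (-k) (min k \<lfloor>Im z / \<delta>\<rfloor>))"]) auto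

lemma rnd_0: "0 \<le> k \<Longrightarrow> rnd \<delta> k 0 = 0"
  unfolding rnd_def rndr_def by (simp add: complex_eq_iff)

lemma rndr_err:
  assumes d: "\<delta> > 0" and k: "real_of_int k \<ge> 1 / \<delta> + 1" and r: "\<bar>r\<bar> \<le> 1"
  shows "\<bar>r - rndr \<delta> k r\<bar> \<le> \<delta>"
proof -
  have "\<bar>r / \<delta>\<bar> \<le> 1 / \<delta>" using d r by (simp add: abs_divide divide_right_mono)
  then have "- (1 / \<delta>) \<le> r / \<delta> \<and> r / \<delta> \<le> 1 / \<delta>" by (simp only: abs_le_iff) (simp add: minus_le_iff)
  then have lo: "- real_of_int k \<le> r / \<delta> - 1" and hi: "r / \<delta> \<le> real_of_int k" using k by linarith+
  have f1: "\<lfloor>r / \<delta>\<rfloor> \<le> k" using hi by (simp add: floor_le_iff)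
  have f2: "-k \<le> \<lfloor>r / \<delta>\<rfloor>" using lo by (simp add: le_floor_iff)
  have e: "rndr \<delta> k r = \<delta> * of_int \<lfloor>r / \<delta>\<rfloor>" unfolding rndr_def using f1 f2 by simp
  have a: "of_int \<lfloor>r / \<delta>\<rfloor> \<le> r / \<delta>" by (rule of_int_floor_le)
  have b: "r / \<delta> < of_int \<lfloor>r / \<delta>\<rfloor> + 1" by (rule real_of_int_floor_add_one_gt)
  have a': "\<delta> * of_int \<lfloor>r / \<delta>\<rfloor> \<le> r" using mult_left_mono[OF a, of \<delta>] d by simp
  have b': "r < \<delta> * of_int \<lfloor>r / \<delta>\<rfloor> + \<delta>" using mult_strict_left_mono[OF b d] d by (simp add: algebra_simps)
  show ?thesis unfolding e using a' b' by simp
qed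

lemma rnd_err:
  assumes d: "\<delta> > 0" and k: "real_of_int k \<ge> 1 / \<delta> + 1" and z: "cmod z \<le> 1"
  shows "cmod (z - rnd \<delta> k z) \<le> 2 * \<delta>"
proof -
  have "\<bar>Re z\<bar> \<le> 1" "\<bar>Im z\<bar> \<le> 1" using z abs_Re_le_cmod abs_Im_le_cmod order_trans by blast+
  then have "\<bar>Re z - rndr \<delta> k (Re z)\<bar> \<le> \<delta>" "\<bar>Im z - rndr \<delta> k (Im z)\<bar> \<le> \<delta>"
    using rndr_err[OF d k] by auto
  then show ?thesis using cmod_le[of "z - rnd \<delta> k z"] unfolding rnd_def by simp
qed

lemma grid_finite: "finite (grid \<delta> k)"
  unfolding grid_def by simp

lemma grid_card: "card (grid \<delta> k) \<le> nat (2 * k + 1) ^ 2"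
proof -
  have "card (grid \<delta> k) \<le> card ({-k..k} \<times> {-k..k})" unfolding grid_def by (rule card_image_le) simp
  also have "\<dots> = nat (2 * k + 1) ^ 2" by (simp add: card_cartesian_product power2_eq_square)
  finally show ?thesis .
qed

lemma index_rnd_mat[simp]:
  "i < dim_row G \<Longrightarrow> j < dim_col G \<Longrightarrow> rnd_mat \<delta> k G $$ (i, j) = rnd \<delta> k (G $$ (i, j))"
  "dim_row (rnd_mat \<delta> k G) = dim_row G" "dim_col (rnd_mat \<delta> k G) = dim_col G"
  unfolding rnd_mat_def by auto


definition agree :: "nat \<Rightarrow> nat set \<Rightarrow> nat \<Rightarrow> nat \<Rightarrow> bool" where
  "agree N S x y \<longleftrightarrow> (\<forall>i<N. i \<notin> S \<longrightarrow> bit x i = bit y i)"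

lemma agree_sym: "agree N S x y \<Longrightarrow> agree N S y x"
  unfolding agree_def by auto

lemma gate_carrier: "gate_on N Q G \<Longrightarrow> G \<in> carrier_mat (2 ^ N) (2 ^ N)"
  unfolding gate_on_def unitary_mat_def by blast

lemma gate_unitary: "gate_on N Q G \<Longrightarrow> unitary_mat (2 ^ N) G"
  unfolding gate_on_def by blast

lemma gate_zero: "gate_on N Q G \<Longrightarrow> x < 2 ^ N \<Longrightarrow> y < 2 ^ N \<Longrightarrow> \<not> agree N Q x y \<Longrightarrow> G $$ (x, y) = 0"
proof -
  assume a: "gate_on N Q G" "x < 2 ^ N" "y < 2 ^ N" "\<not> agree N Q x y"
  obtain g where g: "\<forall>x<2 ^ N. \<forall>y<2 ^ N. G $$ (x, y) =
        (if \<forall>i<N. i \<notin> Q \<longrightarrow> bit x i = bit y i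
         then g (\<lambda>i. i \<in> Q \<and> bit x i) (\<lambda>i. i \<in> Q \<and> bit y i) else 0)"
    using a(1) unfolding gate_on_def by blast
  have c: "\<not> (\<forall>i<N. i \<notin> Q \<longrightarrow> bit x i = bit y i)" using a(4) unfolding agree_def .
  have "G $$ (x, y) = (if \<forall>i<N. i \<notin> Q \<longrightarrow> bit x i = bit y i
         then g (\<lambda>i. i \<in> Q \<and> bit x i) (\<lambda>i. i \<in> Q \<and> bit y i) else 0)" using g a(2,3) by blast
  also have "\<dots> = 0" by (rule if_not_P[OF c])
  finally show ?thesis .
qed

lemma gate_eq:
  assumes "gate_on N Q G" "x < 2 ^ N" "y < 2 ^ N" "x' < 2 ^ N" "y' < 2 ^ N"
    "agree N Q x y" "agree N Q x' y'" "\<And>i. i \<in> Q \<Longrightarrow> bit x i = bit x' i" "\<And>i. i \<in> Q \<Longrightarrow> bit y i = bit y' i"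
  shows "G $$ (x, y) = G $$ (x', y')"
proof -
  obtain g where g: "\<forall>x<2 ^ N. \<forall>y<2 ^ N. G $$ (x, y) =
        (if \<forall>i<N. i \<notin> Q \<longrightarrow> bit x i = bit y i
         then g (\<lambda>i. i \<in> Q \<and> bit x i) (\<lambda>i. i \<in> Q \<and> bit y i) else 0)"
    using assms(1) unfolding gate_on_def by blast
  have e1: "(\<lambda>i. i \<in> Q \<and> bit x i) = (\<lambda>i. i \<in> Q \<and> bit x' i)" using assms(8) by auto
  have e2: "(\<lambda>i. i \<in> Q \<and> bit y i) = (\<lambda>i. i \<in> Q \<and> bit y' i)" using assms(9) by auto
  have c1: "\<forall>i<N. i \<notin> Q \<longrightarrow> bit x i = bit y i" using assms(6) unfolding agree_def .
  have c2: "\<forall>i<N. i \<notin> Q \<longrightarrow> bit x' i = bit y' i" using assms(7) unfolding agree_def .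
  have "G $$ (x, y) = g (\<lambda>i. i \<in> Q \<and> bit x i) (\<lambda>i. i \<in> Q \<and> bit y i)"
    using g assms(2,3) c1 by presburger
  also have "\<dots> = g (\<lambda>i. i \<in> Q \<and> bit x' i) (\<lambda>i. i \<in> Q \<and> bit y' i)" using e1 e2 by (simp only:)
  also have "\<dots> = G $$ (x', y')"
    using g assms(4,5) c2 by presburger
  finally show ?thesis .
qed

lemma unitary_entry_le1:
  assumes "unitary_mat d U" "i < d" "j < d"
  shows "cmod (U $$ (i, j)) \<le> 1"
proof -
  have "(\<Sum>l<d. cnj (U $$ (l, j)) * U $$ (l, j)) = 1" using unitary_col_orth[OF assms(1) assms(3) assms(3)] by simp
  moreover have "(\<Sum>l<d. cnj (U $$ (l, j)) * U $$ (l, j)) = complex_of_real (\<Sum>l<d. (cmod (U $$ (l, j)))\<^sup>2)"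
    by (simp only: of_real_sum complex_norm_square mult.commute)
  ultimately have s: "(\<Sum>l<d. (cmod (U $$ (l, j)))\<^sup>2) = 1" by (metis of_real_eq_1_iff)
  have "(cmod (U $$ (i, j)))\<^sup>2 \<le> (\<Sum>l<d. (cmod (U $$ (l, j)))\<^sup>2)"
    by (rule member_le_sum) (auto simp: assms)
  then have "(cmod (U $$ (i, j)))\<^sup>2 \<le> 1\<^sup>2" using s by simp
  then show ?thesis by (rule power2_le_imp_le) simp
qed

lemma agree_card:
  assumes "Q \<subseteq> {..<N}" "x < 2 ^ N"
  shows "card {y. y < 2 ^ N \<and> agree N Q x y} \<le> 2 ^ card Q"
proof -
  let ?Y = "{y. y < 2 ^ N \<and> agree N Q x y}"
  have fQ: "finite Q" using assms(1) finite_subset by blast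
  have inj: "inj_on (\<lambda>y. restrict (bit y) Q) ?Y"
  proof (rule inj_onI)
    fix y y' assume y: "y \<in> ?Y" and y': "y' \<in> ?Y" and e: "restrict (bit y) Q = restrict (bit y') Q"
    show "y = y'"
    proof (rule nat_bits_eq[of y N y'])
      show "y < 2 ^ N" "y' < 2 ^ N" using y y' by auto
      fix i assume i: "i < N"
      show "bit y i = bit y' i"
      proof (cases "i \<in> Q")
        case True
        then show ?thesis using fun_cong[OF e, of i] by simp
      next
        case False
        then show ?thesis using y y' i unfolding agree_def by auto
      qed
    qed
  qed
  have "card ?Y = card ((\<lambda>y. restrict (bit y) Q) ` ?Y)" using inj by (simp add: card_image)
  also have "\<dots> \<le> card (PiE Q (\<lambda>_. UNIV :: bool set))"
    by (rule card_mono) (auto simp: fQ finite_PiE)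
  also have "\<dots> = 2 ^ card Q" by (simp add: card_PiE fQ)
  finally show ?thesis .
qed

lemma gate_card_Q: "gate_on N Q G \<Longrightarrow> card Q \<le> 2"
proof -
  assume "gate_on N Q G"
  then have "card Q = 1 \<or> card Q = 2" unfolding gate_on_def by blast
  then show ?thesis by linarith
qed

lemma gate_Q: "gate_on N Q G \<Longrightarrow> Q \<subseteq> {..<N}"
  unfolding gate_on_def by blast

lemma gate_Q_ne: "gate_on N Q G \<Longrightarrow> Q \<noteq> {}"
proof -
  assume "gate_on N Q G"
  then have "card Q = 1 \<or> card Q = 2" unfolding gate_on_def by blast
  then show ?thesis by auto
qed

lemma gate_good:
  assumes g: "gate_on N Q G" and d: "\<delta> > 0" and k: "real_of_int k \<ge> 1 / \<delta> + 1"
  shows "good_pair (2 ^ N) (8 * \<delta>) G (rnd_mat \<delta> k G)"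
proof -
  have G: "G \<in> carrier_mat (2 ^ N) (2 ^ N)" by (rule gate_carrier[OF g])
  have U: "unitary_mat (2 ^ N) G" by (rule gate_unitary[OF g])
  have Q: "Q \<subseteq> {..<N}" using g by (rule gate_Q)
  have k0: "0 \<le> k"
  proof -
    have "0 < 1 / \<delta> + 1" using d by (simp add: add_pos_pos)
    then show ?thesis using k by linarith
  qed
  have dG: "dim_row G = 2 ^ N" "dim_col G = 2 ^ N" using G by auto
  have R: "rnd_mat \<delta> k G \<in> carrier_mat (2 ^ N) (2 ^ N)" unfolding carrier_mat_def by (simp add: dG)
  have ent: "(G - rnd_mat \<delta> k G) $$ (x, y) = G $$ (x, y) - rnd \<delta> k (G $$ (x, y))"
    if "x < 2 ^ N" "y < 2 ^ N" for x y
    using that R by (simp add: dG)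
  have main: "vnorm ((G - rnd_mat \<delta> k G) *\<^sub>v v) \<le> 8 * \<delta> * vnorm v" if v: "v \<in> carrier_vec (2 ^ N)" for v
  proof -
    have "vnorm ((G - rnd_mat \<delta> k G) *\<^sub>v v) \<le> real 4 * (2 * \<delta>) * vnorm v"
    proof (rule sparse_bound[where R = "agree N Q"])
      show "G - rnd_mat \<delta> k G \<in> carrier_mat (2 ^ N) (2 ^ N)" using R by (rule minus_carrier_mat)
      show "v \<in> carrier_vec (2 ^ N)" by (rule v)
      fix x y :: nat assume x: "x < 2 ^ N" and y: "y < 2 ^ N"
      show "\<not> agree N Q x y \<Longrightarrow> (G - rnd_mat \<delta> k G) $$ (x, y) = 0"
      proof -
        assume "\<not> agree N Q x y"
        then have "G $$ (x, y) = 0" by (rule gate_zero[OF g x y])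
        then show ?thesis unfolding ent[OF x y] using rnd_0[OF k0] by (simp only: diff_zero)
      qed
      have "cmod (G $$ (x, y) - rnd \<delta> k (G $$ (x, y))) \<le> 2 * \<delta>"
        by (rule rnd_err[OF d k unitary_entry_le1[OF U x y]])
      then show "cmod ((G - rnd_mat \<delta> k G) $$ (x, y)) \<le> 2 * \<delta>" unfolding ent[OF x y] .
    next
      fix x y :: nat assume "agree N Q x y" then show "agree N Q y x" by (rule agree_sym)
    next
      fix x :: nat assume x: "x < 2 ^ N"
      have "card {y. y < 2 ^ N \<and> agree N Q x y} \<le> 2 ^ card Q" by (rule agree_card[OF Q x])
      also have "(2::nat) ^ card Q \<le> 2 ^ 2" by (rule power_increasing[OF gate_card_Q[OF g]]) simp
      finally show "card {y. y < 2 ^ N \<and> agree N Q x y} \<le> 4" by simp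
    next
      show "0 \<le> 2 * \<delta>" using d by simp
    qed
    then show ?thesis by simp
  qed
  show ?thesis unfolding good_pair_def
  proof (intro conjI G R ballI)
    fix v :: "complex vec" assume v: "v \<in> carrier_vec (2 ^ N)"
    show "vnorm (G *\<^sub>v v) \<le> vnorm v" using unitary_norm[OF U v] by simp
    show "vnorm ((G - rnd_mat \<delta> k G) *\<^sub>v v) \<le> 8 * \<delta> * vnorm v" by (rule main[OF v])
  qed
qed


definition Rg :: "nat \<Rightarrow> nat \<Rightarrow> nat \<Rightarrow> ((bool \<times> bool) \<times> (bool \<times> bool) \<Rightarrow> complex) \<Rightarrow> complex mat" where
  "Rg N a b h = mat (2 ^ N) (2 ^ N) (\<lambda>(x, y). if agree N {a, b} x y then h ((bit x a, bit x b), (bit y a, bit y b)) else 0)"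

lemma Q_pair: "card Q = 1 \<or> card Q = 2 \<Longrightarrow> \<exists>a b. Q = {a, b}"
  by (metis card_1_singletonE card_2_iff insert_absorb2)

lemma gate_rnd_repr:
  assumes g: "gate_on N Q G" and k0: "0 \<le> k"
  shows "\<exists>a b h. a < N \<and> b < N \<and> (\<forall>p. h p \<in> grid \<delta> k) \<and> rnd_mat \<delta> k G = Rg N a b h"
proof -
  have "card Q = 1 \<or> card Q = 2" using g unfolding gate_on_def by blast
  then obtain a b where ab: "Q = {a, b}" using Q_pair by blast
  have QN: "Q \<subseteq> {..<N}" using g by (rule gate_Q)
  obtain g0 where g0: "\<forall>x<2 ^ N. \<forall>y<2 ^ N. G $$ (x, y) =
        (if \<forall>i<N. i \<notin> Q \<longrightarrow> bit x i = bit y i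
         then g0 (\<lambda>i. i \<in> Q \<and> bit x i) (\<lambda>i. i \<in> Q \<and> bit y i) else 0)"
    using g unfolding gate_on_def by blast
  define h where "h = (\<lambda>((p1, p2), (q1, q2)). rnd \<delta> k (g0 (\<lambda>i. (i = a \<and> p1) \<or> (i = b \<and> p2)) (\<lambda>i. (i = a \<and> q1) \<or> (i = b \<and> q2))))"
  have G: "G \<in> carrier_mat (2 ^ N) (2 ^ N)" by (rule gate_carrier[OF g])
  have hg: "h p \<in> grid \<delta> k" for p unfolding h_def using rnd_in_grid[OF k0] by (auto split: prod.splits)
  have eq: "rnd_mat \<delta> k G = Rg N a b h"
  proof (rule eq_matI)
    show "dim_row (rnd_mat \<delta> k G) = dim_row (Rg N a b h)" "dim_col (rnd_mat \<delta> k G) = dim_col (Rg N a b h)"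
      using G by (auto simp: Rg_def)
    fix x y assume x: "x < dim_row (Rg N a b h)" and y: "y < dim_col (Rg N a b h)"
    have x': "x < 2 ^ N" and y': "y < 2 ^ N" using x y by (auto simp: Rg_def)
    have Gxy: "G $$ (x, y) = (if agree N Q x y then g0 (\<lambda>i. i \<in> Q \<and> bit x i) (\<lambda>i. i \<in> Q \<and> bit y i) else 0)"
      using g0 x' y' unfolding agree_def by blast
    have fx: "(\<lambda>i. i \<in> Q \<and> bit x i) = (\<lambda>i. (i = a \<and> bit x a) \<or> (i = b \<and> bit x b))" unfolding ab by auto
    have fy: "(\<lambda>i. i \<in> Q \<and> bit y i) = (\<lambda>i. (i = a \<and> bit y a) \<or> (i = b \<and> bit y b))" unfolding ab by auto
    have l: "rnd_mat \<delta> k G $$ (x, y) = rnd \<delta> k (G $$ (x, y))" using G x' y' by simp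
    have r: "Rg N a b h $$ (x, y) = (if agree N {a, b} x y then h ((bit x a, bit x b), (bit y a, bit y b)) else 0)"
      using x' y' by (simp add: Rg_def)
    show "rnd_mat \<delta> k G $$ (x, y) = Rg N a b h $$ (x, y)"
    proof (cases "agree N Q x y")
      case True
      then show ?thesis unfolding l r Gxy using ab fx fy by (simp add: h_def)
    next
      case False
      then show ?thesis unfolding l r Gxy using ab rnd_0[OF k0] by simp
    qed
  qed
  have "a < N" "b < N" using QN ab by auto
  then show ?thesis using hg eq by blast
qed

definition RG :: "nat \<Rightarrow> real \<Rightarrow> int \<Rightarrow> complex mat set" where
  "RG N \<delta> k = (\<lambda>(a, b, h). Rg N a b h) ` ({..<N} \<times> {..<N} \<times> PiE UNIV (\<lambda>_. grid \<delta> k))"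

lemma gate_rnd_RG: "gate_on N Q G \<Longrightarrow> 0 \<le> k \<Longrightarrow> rnd_mat \<delta> k G \<in> RG N \<delta> k"
proof -
  assume a: "gate_on N Q G" "0 \<le> k"
  obtain x y h where "x < N" "y < N" "\<forall>p. h p \<in> grid \<delta> k" "rnd_mat \<delta> k G = Rg N x y h"
    using gate_rnd_repr[OF a] by blast
  then show ?thesis unfolding RG_def by (intro image_eqI[where x="(x, y, h)"]) auto
qed

lemma RG_finite: "finite (RG N \<delta> k)"
  unfolding RG_def by (intro finite_imageI finite_cartesian_product finite_PiE grid_finite) auto

lemma RG_card: "card (RG N \<delta> k) \<le> N * N * card (grid \<delta> k) ^ 16"
proof -
  have c16: "card (UNIV :: ((bool \<times> bool) \<times> (bool \<times> bool)) set) = 16"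
    by (simp add: UNIV_Times_UNIV[symmetric] card_cartesian_product del: UNIV_Times_UNIV)
  have "card (RG N \<delta> k) \<le> card ({..<N} \<times> {..<N} \<times> PiE (UNIV :: ((bool \<times> bool) \<times> (bool \<times> bool)) set) (\<lambda>_. grid \<delta> k))"
    unfolding RG_def by (rule card_image_le) (intro finite_cartesian_product finite_PiE grid_finite; simp)
  also have "\<dots> = N * N * card (grid \<delta> k) ^ 16"
    by (simp add: card_cartesian_product card_PiE c16)
  finally show ?thesis .
qed

lemma card_lists_le:
  assumes "finite A"
  shows "finite {xs. length xs \<le> k \<and> set xs \<subseteq> A} \<and> card {xs. length xs \<le> k \<and> set xs \<subseteq> A} \<le> (card A + 1) ^ k"
proof (induction k)
  case 0
  have "{xs. length xs \<le> 0 \<and> set xs \<subseteq> A} = {[]}" by auto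
  then show ?case by simp
next
  case (Suc k)
  let ?S = "{xs. length xs \<le> k \<and> set xs \<subseteq> A}"
  have e: "{xs. length xs \<le> Suc k \<and> set xs \<subseteq> A} = insert [] ((\<lambda>(a, xs). a # xs) ` (A \<times> ?S))"
  proof -
    have "xs \<in> {xs. length xs \<le> Suc k \<and> set xs \<subseteq> A} \<longleftrightarrow> xs \<in> insert [] ((\<lambda>(a, xs). a # xs) ` (A \<times> ?S))" for xs
      by (cases xs) auto
    then show ?thesis by blast
  qed
  have f: "finite (A \<times> ?S)" using Suc assms by simp
  have "card (insert [] ((\<lambda>(a, xs). a # xs) ` (A \<times> ?S))) \<le> Suc (card ((\<lambda>(a, xs). a # xs) ` (A \<times> ?S)))"
    by (rule card_insert_le_m1) (simp_all add: f)
  also have "card ((\<lambda>(a, xs). a # xs) ` (A \<times> ?S)) \<le> card (A \<times> ?S)" by (rule card_image_le[OF f])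
  also have "card (A \<times> ?S) = card A * card ?S" by (rule card_cartesian_product)
  also have "card A * card ?S \<le> card A * (card A + 1) ^ k" using Suc by simp
  finally have "card {xs. length xs \<le> Suc k \<and> set xs \<subseteq> A} \<le> Suc (card A * (card A + 1) ^ k)"
    unfolding e by simp
  also have "\<dots> \<le> (card A + 1) ^ Suc k" by simp
  finally show ?case using e f by simp
qed


definition gl :: "'a list list \<Rightarrow> 'a list" where "gl C = concat (rev C)"

definition rcirc :: "real \<Rightarrow> int \<Rightarrow> (nat set \<times> complex mat) list list \<Rightarrow> complex mat list list" where
  "rcirc \<delta> k C = map (map (\<lambda>(Q, G). rnd_mat \<delta> k G)) C"

lemma layer_prodl: "layer_op N L = prodl (2 ^ N) (map snd L)"
  by (induction L) (auto simp: layer_op_def)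

lemma is_layer_gate: "is_layer N L \<Longrightarrow> (Q, G) \<in> set L \<Longrightarrow> gate_on N Q G"
  unfolding is_layer_def by blast

lemma gl_gate: "is_circuit N C \<Longrightarrow> (Q, G) \<in> set (gl C) \<Longrightarrow> gate_on N Q G"
  unfolding is_circuit_def gl_def using is_layer_gate by fastforce

lemma gl_carrier: "is_circuit N C \<Longrightarrow> set (map snd (gl C)) \<subseteq> carrier_mat (2 ^ N) (2 ^ N)"
  using gl_gate gate_carrier by fastforce

lemma circ_prodl: "is_circuit N C \<Longrightarrow> circuit_op N C = prodl (2 ^ N) (map snd (gl C))"
proof (induction C rule: rev_induct)
  case Nil
  then show ?case by (simp add: circuit_op_def gl_def)
next
  case (snoc L C)
  have cC: "is_circuit N C" and lL: "is_layer N L" using snoc.prems unfolding is_circuit_def by auto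
  have sL: "set (map snd L) \<subseteq> carrier_mat (2 ^ N) (2 ^ N)"
    using lL is_layer_gate gate_carrier by fastforce
  have "circuit_op N (C @ [L]) = layer_op N L * circuit_op N C" by (simp add: circuit_op_def)
  also have "\<dots> = prodl (2 ^ N) (map snd L) * prodl (2 ^ N) (map snd (gl C))"
    using snoc.IH[OF cC] by (simp add: layer_prodl)
  also have "\<dots> = prodl (2 ^ N) (map snd L @ map snd (gl C))"
    by (rule prodl_append[symmetric, OF sL gl_carrier[OF cC]])
  also have "map snd L @ map snd (gl C) = map snd (gl (C @ [L]))" by (simp add: gl_def)
  finally show ?case .
qed

lemma rcirc_gl: "concat (rev (rcirc \<delta> k C)) = map (\<lambda>(Q, G). rnd_mat \<delta> k G) (gl C)"
  unfolding rcirc_def gl_def by (simp add: rev_map map_concat)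

lemma list_all2_maps: "(\<And>x. x \<in> set xs \<Longrightarrow> P (f x) (g x)) \<Longrightarrow> list_all2 P (map f xs) (map g xs)"
  by (induction xs) auto

lemma layer_length:
  assumes "is_layer N L"
  shows "length L \<le> N"
proof -
  have ne: "fst (L ! i) \<noteq> {}" and sub: "fst (L ! i) \<subseteq> {..<N}" if "i < length L" for i
  proof -
    have "L ! i \<in> set L" using that by simp
    then have "gate_on N (fst (L ! i)) (snd (L ! i))" using assms is_layer_gate[of N L] by (metis prod.collapse)
    then show "fst (L ! i) \<noteq> {}" "fst (L ! i) \<subseteq> {..<N}" using gate_Q_ne gate_Q by auto
  qed
  have disj: "\<And>i j. i < length L \<Longrightarrow> j < length L \<Longrightarrow> i \<noteq> j \<Longrightarrow> fst (L ! i) \<inter> fst (L ! j) = {}"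
    using assms unfolding is_layer_def by blast
  have fin: "finite (fst (L ! i))" if "i < length L" for i using sub[OF that] finite_subset by blast
  have inj: "inj_on (\<lambda>i. Min (fst (L ! i))) {..<length L}"
  proof (rule inj_onI)
    fix i j assume i: "i \<in> {..<length L}" and j: "j \<in> {..<length L}" and e: "Min (fst (L ! i)) = Min (fst (L ! j))"
    show "i = j"
    proof (rule ccontr)
      assume "i \<noteq> j"
      then have "fst (L ! i) \<inter> fst (L ! j) = {}" using disj i j by auto
      moreover have "Min (fst (L ! i)) \<in> fst (L ! i)" using i fin ne by (intro Min_in) auto
      moreover have "Min (fst (L ! j)) \<in> fst (L ! j)" using j fin ne by (intro Min_in) auto
      ultimately show False using e by auto
    qed
  qed
  have "(\<lambda>i. Min (fst (L ! i))) ` {..<length L} \<subseteq> {..<N}"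
  proof
    fix x assume "x \<in> (\<lambda>i. Min (fst (L ! i))) ` {..<length L}"
    then obtain i where i: "i < length L" and x: "x = Min (fst (L ! i))" by auto
    have "Min (fst (L ! i)) \<in> fst (L ! i)" using i fin ne by (intro Min_in) auto
    then show "x \<in> {..<N}" using sub[OF i] x by auto
  qed
  then have "card {..<length L} \<le> card {..<N}" using inj by (intro card_inj_on_le) auto
  then show ?thesis by simp
qed

lemma gl_length: "is_circuit N C \<Longrightarrow> length (gl C) \<le> N * length C"
proof (induction C)
  case Nil
  then show ?case by (simp add: gl_def)
next
  case (Cons L C)
  have "is_layer N L" "is_circuit N C" using Cons.prems unfolding is_circuit_def by auto
  then have "length L \<le> N" "length (gl C) \<le> N * length C" using layer_length Cons.IH by auto
  then show ?case by (simp add: gl_def)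
qed

lemma circ_perturb:
  assumes c: "is_circuit N C" and d: "\<delta> > 0" and k: "real_of_int k \<ge> 1 / \<delta> + 1"
    and e: "e \<in> carrier_vec (2 ^ N)" and e1: "vnorm e = 1"
  shows "vnorm (circuit_op N C *\<^sub>v e - prodl (2 ^ N) (concat (rev (rcirc \<delta> k C))) *\<^sub>v e)
     \<le> real (length (gl C)) * (8 * \<delta>) * (1 + 8 * \<delta>) ^ length (gl C)"
proof -
  have la: "list_all2 (good_pair (2 ^ N) (8 * \<delta>)) (map snd (gl C)) (map (\<lambda>(Q, G). rnd_mat \<delta> k G) (gl C))"
  proof (rule list_all2_maps)
    fix x assume "x \<in> set (gl C)"
    then have "gate_on N (fst x) (snd x)" using gl_gate[OF c, of "fst x" "snd x"] by simp
    then show "good_pair (2 ^ N) (8 * \<delta>) (snd x) (case x of (Q, G) \<Rightarrow> rnd_mat \<delta> k G)"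
      using gate_good[OF _ d k] by (auto split: prod.splits)
  qed
  have "vnorm (prodl (2 ^ N) (map snd (gl C)) *\<^sub>v e - prodl (2 ^ N) (map (\<lambda>(Q, G). rnd_mat \<delta> k G) (gl C)) *\<^sub>v e)
     \<le> real (length (map snd (gl C))) * (8 * \<delta>) * (1 + 8 * \<delta>) ^ length (map snd (gl C)) * vnorm e"
    by (rule perturb[OF la e]) (use d in simp)
  then show ?thesis using e1 by (simp add: circ_prodl[OF c] rcirc_gl)
qed


lemma bidx_mk: "dim_vec v = n \<Longrightarrow> bidx v = mk n (\<lambda>i. v $ i = 1)"
  unfolding bidx_def mk_def horner_sum_eq_sum by (simp add: atLeast0LessThan sum.If_cases)

lemma bidx_less: "dim_vec v = n \<Longrightarrow> bidx v < 2 ^ n"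
  using bidx_mk mk_less by metis

lemma bit_bidx: "dim_vec v = n \<Longrightarrow> bit (bidx v) i \<longleftrightarrow> i < n \<and> v $ i = 1"
  using bidx_mk bit_mk by metis

lemma bit_type_cases: "(b::bit) = 0 \<or> b = 1"
  by (cases b) auto

lemma bidx_inj: "dim_vec v = n \<Longrightarrow> dim_vec w = n \<Longrightarrow> bidx v = bidx w \<Longrightarrow> v = w"
proof -
  assume a: "dim_vec v = n" "dim_vec w = n" "bidx v = bidx w"
  show "v = w"
  proof (rule eq_vecI)
    fix i assume "i < dim_vec w"
    then have i: "i < n" using a by simp
    have "v $ i = 1 \<longleftrightarrow> w $ i = 1" using bit_bidx[OF a(1), of i] bit_bidx[OF a(2), of i] a(3) i by simp
    then show "v $ i = w $ i" using bit_type_cases[of "v $ i"] bit_type_cases[of "w $ i"] by auto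
  qed (use a in simp)
qed

lemma unit_vec_dist:
  assumes "y < D" "y' < D" "y \<noteq> y'"
  shows "vnorm (unit_vec D y - unit_vec D y') = sqrt 2"
proof -
  have "(\<Sum>i<D. (cmod ((unit_vec D y - unit_vec D y') $ i))\<^sup>2) = (\<Sum>i<D. (if i = y then 1 else 0) + (if i = y' then 1 else 0))"
    using assms by (intro sum.cong refl) auto
  also have "\<dots> = 2" using assms by (simp add: sum.distrib)
  finally show ?thesis unfolding vnorm_def by simp
qed

lemma mat_eq_by_vec:
  fixes M M' :: "bit mat"
  assumes "M \<in> carrier_mat n n" "M' \<in> carrier_mat n n" "\<And>v. v \<in> carrier_vec n \<Longrightarrow> M *\<^sub>v v = M' *\<^sub>v v"
  shows "M = M'"
proof (rule eq_matI)
  fix i j assume i: "i < dim_row M'" and j: "j < dim_col M'"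
  have i': "i < n" and j': "j < n" using i j assms(2) by auto
  have "M $$ (i, j) = (M *\<^sub>v unit_vec n j) $ i" using assms(1) i' j' by simp
  also have "\<dots> = (M' *\<^sub>v unit_vec n j) $ i" using assms(3)[of "unit_vec n j"] by simp
  also have "\<dots> = M' $$ (i, j)" using assms(2) i' j' by simp
  finally show "M $$ (i, j) = M' $$ (i, j)" .
qed (use assms in auto)

lemma approx_vec:
  assumes ap: "approximates n m eps C M" and M: "M \<in> carrier_mat n n" and v: "v \<in> carrier_vec n"
  shows "vnorm (circuit_op (n + m) C *\<^sub>v unit_vec (2 ^ (n + m)) (bidx v) - unit_vec (2 ^ (n + m)) (bidx (M *\<^sub>v v))) < eps"
proof -
  obtain \<phi> where phi: "\<phi> \<in> carrier_vec (2 ^ n)"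
    and eq: "circuit_op (n + m) C *\<^sub>v unit_vec (2 ^ (n + m)) (bidx v) = vec (2 ^ (n + m)) (\<lambda>j. if j < 2 ^ n then \<phi> $ j else 0)"
    and lt: "vnorm (\<phi> - unit_vec (2 ^ n) (bidx (M *\<^sub>v v))) < eps"
    using ap v unfolding approximates_def by blast
  define y where "y = bidx (M *\<^sub>v v)"
  have y: "y < 2 ^ n" unfolding y_def using M by (intro bidx_less) simp
  have nN: "(2::nat) ^ n \<le> 2 ^ (n + m)" by (simp add: power_increasing)
  have "vnorm (vec (2 ^ (n + m)) (\<lambda>j. if j < 2 ^ n then \<phi> $ j else 0) - unit_vec (2 ^ (n + m)) y)
      = vnorm (\<phi> - unit_vec (2 ^ n) y)"
  proof -
    have "(\<Sum>i<2 ^ (n + m). (cmod ((vec (2 ^ (n + m)) (\<lambda>j. if j < 2 ^ n then \<phi> $ j else 0) - unit_vec (2 ^ (n + m)) y) $ i))\<^sup>2)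
        = (\<Sum>i<2 ^ n. (cmod ((vec (2 ^ (n + m)) (\<lambda>j. if j < 2 ^ n then \<phi> $ j else 0) - unit_vec (2 ^ (n + m)) y) $ i))\<^sup>2)"
      apply (rule sum.mono_neutral_right)
      subgoal by simp
      subgoal using nN by auto
      subgoal using y by auto
      done
    also have "\<dots> = (\<Sum>i<2 ^ n. (cmod ((\<phi> - unit_vec (2 ^ n) y) $ i))\<^sup>2)"
    proof (rule sum.cong[OF refl])
      fix x :: nat assume "x \<in> {..<2 ^ n}"
      then have x: "x < 2 ^ n" by simp
      then have x2: "x < 2 ^ (n + m)" using less_le_trans nN by blast
      show "(cmod ((vec (2 ^ (n + m)) (\<lambda>j. if j < 2 ^ n then \<phi> $ j else 0) - unit_vec (2 ^ (n + m)) y) $ x))\<^sup>2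
         = (cmod ((\<phi> - unit_vec (2 ^ n) y) $ x))\<^sup>2" using x x2 phi y less_le_trans[OF y nN] by simp
    qed
    finally show ?thesis unfolding vnorm_def using phi by simp
  qed
  then show ?thesis using eq lt unfolding y_def by simp
qed


lemma rcirc_carrier: "is_circuit N C \<Longrightarrow> set (concat (rev (rcirc \<delta> k C))) \<subseteq> carrier_mat (2 ^ N) (2 ^ N)"
proof
  fix A assume c: "is_circuit N C" and "A \<in> set (concat (rev (rcirc \<delta> k C)))"
  then obtain Q G where "(Q, G) \<in> set (gl C)" and A: "A = rnd_mat \<delta> k G" unfolding rcirc_gl by auto
  then have "gate_on N Q G" using gl_gate c by blast
  then have "G \<in> carrier_mat (2 ^ N) (2 ^ N)" by (rule gate_carrier)
  then show "A \<in> carrier_mat (2 ^ N) (2 ^ N)" unfolding A carrier_mat_def by simp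
qed

lemma circ_carrier: "is_circuit N C \<Longrightarrow> circuit_op N C \<in> carrier_mat (2 ^ N) (2 ^ N)"
  using circ_prodl prodl_carrier gl_carrier by metis

lemma vnorm_unit: "i < D \<Longrightarrow> vnorm (unit_vec D i) = 1"
proof -
  assume i: "i < D"
  have "(\<Sum>j<D. (cmod (unit_vec D i $ j))\<^sup>2) = (\<Sum>j<D. if j = i then 1 else 0)"
    using i by (intro sum.cong refl) auto
  also have "\<dots> = 1" using i by simp
  finally show ?thesis unfolding vnorm_def by simp
qed

lemma approx_unique:
  fixes eps \<eta> \<delta> :: real
  assumes ap: "approximates n m eps C M" and ap': "approximates n m eps C' M'"
    and M: "M \<in> carrier_mat n n" and M': "M' \<in> carrier_mat n n"
    and r: "rcirc \<delta> k C = rcirc \<delta> k C'" and d: "\<delta> > 0" and k: "real_of_int k \<ge> 1 / \<delta> + 1"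
    and b: "real (length (gl C)) * (8 * \<delta>) * (1 + 8 * \<delta>) ^ length (gl C) \<le> \<eta>"
    and b': "real (length (gl C')) * (8 * \<delta>) * (1 + 8 * \<delta>) ^ length (gl C') \<le> \<eta>"
    and s: "2 * eps + 2 * \<eta> \<le> sqrt 2"
  shows "M = M'"
proof (rule mat_eq_by_vec[OF M M'])
  fix v :: "bit vec" assume v: "v \<in> carrier_vec n"
  define N where "N = n + m"
  have c: "is_circuit N C" and c': "is_circuit N C'" using ap ap' unfolding approximates_def N_def by auto
  define e :: "complex vec" where "e = unit_vec (2 ^ N) (bidx v)"
  have nN: "(2::nat) ^ n \<le> 2 ^ N" unfolding N_def by (simp add: power_increasing)
  have bv: "bidx v < 2 ^ N" using bidx_less[of v n] v less_le_trans[OF _ nN] by auto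
  have e: "e \<in> carrier_vec (2 ^ N)" unfolding e_def by simp
  have e1: "vnorm e = 1" unfolding e_def by (rule vnorm_unit[OF bv])
  define U where "U = circuit_op N C"
  define U' where "U' = circuit_op N C'"
  define V where "V = prodl (2 ^ N) (concat (rev (rcirc \<delta> k C)))"
  have V': "V = prodl (2 ^ N) (concat (rev (rcirc \<delta> k C')))" unfolding V_def r ..
  have Uc: "U \<in> carrier_mat (2 ^ N) (2 ^ N)" unfolding U_def by (rule circ_carrier[OF c])
  have U'c: "U' \<in> carrier_mat (2 ^ N) (2 ^ N)" unfolding U'_def by (rule circ_carrier[OF c'])
  have Vc: "V \<in> carrier_mat (2 ^ N) (2 ^ N)" unfolding V_def by (rule prodl_carrier[OF rcirc_carrier[OF c]])
  define u :: "complex vec" where "u = unit_vec (2 ^ N) (bidx (M *\<^sub>v v))"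
  define u' :: "complex vec" where "u' = unit_vec (2 ^ N) (bidx (M' *\<^sub>v v))"
  have h1: "vnorm (U *\<^sub>v e - V *\<^sub>v e) \<le> \<eta>"
    using circ_perturb[OF c d k e e1] b unfolding U_def V_def by linarith
  have h1': "vnorm (U' *\<^sub>v e - V *\<^sub>v e) \<le> \<eta>"
    using circ_perturb[OF c' d k e e1] b' unfolding U'_def V' by linarith
  have h2: "vnorm (U *\<^sub>v e - u) < eps"
    using approx_vec[OF ap M v] unfolding U_def e_def u_def N_def .
  have h2': "vnorm (U' *\<^sub>v e - u') < eps"
    using approx_vec[OF ap' M' v] unfolding U'_def e_def u'_def N_def .
  have dims: "dim_vec (U *\<^sub>v e) = 2 ^ N" "dim_vec (U' *\<^sub>v e) = 2 ^ N" "dim_vec (V *\<^sub>v e) = 2 ^ N"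
    "dim_vec u = 2 ^ N" "dim_vec u' = 2 ^ N" using carrier_matD[OF Uc] carrier_matD[OF U'c] carrier_matD[OF Vc] unfolding u_def u'_def by auto
  have "vnorm (u - u') \<le> vnorm (u - V *\<^sub>v e) + vnorm (V *\<^sub>v e - u')"
    by (rule vnorm_diff) (simp_all add: dims carrier_matD[OF Uc] carrier_matD[OF U'c] carrier_matD[OF Vc])
  also have "vnorm (u - V *\<^sub>v e) \<le> vnorm (u - U *\<^sub>v e) + vnorm (U *\<^sub>v e - V *\<^sub>v e)"
    by (rule vnorm_diff) (simp_all add: dims carrier_matD[OF Uc] carrier_matD[OF U'c] carrier_matD[OF Vc])
  also have "vnorm (V *\<^sub>v e - u') \<le> vnorm (V *\<^sub>v e - U' *\<^sub>v e) + vnorm (U' *\<^sub>v e - u')"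
    by (rule vnorm_diff) (simp_all add: dims carrier_matD[OF Uc] carrier_matD[OF U'c] carrier_matD[OF Vc])
  also have "vnorm (u - U *\<^sub>v e) = vnorm (U *\<^sub>v e - u)" by (rule vnorm_minus_comm) (simp add: dims carrier_matD[OF Uc] carrier_matD[OF U'c] carrier_matD[OF Vc])
  also have "vnorm (V *\<^sub>v e - U' *\<^sub>v e) = vnorm (U' *\<^sub>v e - V *\<^sub>v e)" by (rule vnorm_minus_comm) (simp add: dims carrier_matD[OF Uc] carrier_matD[OF U'c] carrier_matD[OF Vc])
  finally have lt: "vnorm (u - u') < sqrt 2" using h1 h1' h2 h2' s by linarith
  have Mv: "dim_vec (M *\<^sub>v v) = n" "dim_vec (M' *\<^sub>v v) = n" using M M' by auto
  have y: "bidx (M *\<^sub>v v) < 2 ^ N" "bidx (M' *\<^sub>v v) < 2 ^ N"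
    using less_le_trans[OF bidx_less[OF Mv(1)] nN] less_le_trans[OF bidx_less[OF Mv(2)] nN] by auto
  have "bidx (M *\<^sub>v v) = bidx (M' *\<^sub>v v)"
  proof (rule ccontr)
    assume "bidx (M *\<^sub>v v) \<noteq> bidx (M' *\<^sub>v v)"
    then have "vnorm (u - u') = sqrt 2" unfolding u_def u'_def using y by (intro unit_vec_dist) auto
    then show False using lt by simp
  qed
  then show "M *\<^sub>v v = M' *\<^sub>v v" using bidx_inj[OF Mv] by blast
qed

lemma B2_card:
  fixes eps \<eta> \<delta> :: real
  assumes d: "\<delta> > 0" and k: "real_of_int k \<ge> 1 / \<delta> + 1"
    and b: "\<And>s. s \<le> (n + m) * D \<Longrightarrow> real s * (8 * \<delta>) * (1 + 8 * \<delta>) ^ s \<le> \<eta>"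
    and s: "2 * eps + 2 * \<eta> \<le> sqrt 2"
  shows "card {M \<in> GL2 n. \<exists>C. approximates n m eps C M \<and> length C \<le> D}
     \<le> ((card (RG (n + m) \<delta> k) + 1) ^ (n + m) + 1) ^ D"
proof -
  define N where "N = n + m"
  define B where "B = {M \<in> GL2 n. \<exists>C. approximates n m eps C M \<and> length C \<le> D}"
  define LS where "LS = {l. length l \<le> N \<and> set l \<subseteq> RG N \<delta> k}"
  define T where "T = {rc. length rc \<le> D \<and> set rc \<subseteq> LS}"
  have k0: "0 \<le> k"
  proof -
    have "0 < 1 / \<delta> + 1" using d by (simp add: add_pos_pos)
    then show ?thesis using k by linarith
  qed
  have LSf: "finite LS" and LSc: "card LS \<le> (card (RG N \<delta> k) + 1) ^ N"
    using card_lists_le[OF RG_finite, of N N \<delta> k] unfolding LS_def by auto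
  have Tf: "finite T" and Tc: "card T \<le> (card LS + 1) ^ D"
    using card_lists_le[OF LSf, of D] unfolding T_def by auto
  define Cof where "Cof M = (SOME C. approximates n m eps C M \<and> length C \<le> D)" for M
  have Cof: "approximates n m eps (Cof M) M \<and> length (Cof M) \<le> D" if "M \<in> B" for M
  proof -
    have "\<exists>C. approximates n m eps C M \<and> length C \<le> D" using that unfolding B_def by blast
    from someI_ex[OF this] show ?thesis unfolding Cof_def .
  qed
  define f where "f M = rcirc \<delta> k (Cof M)" for M
  have bC: "real (length (gl (Cof M))) * (8 * \<delta>) * (1 + 8 * \<delta>) ^ length (gl (Cof M)) \<le> \<eta>" if "M \<in> B" for M
  proof (rule b)
    have "is_circuit N (Cof M)" using Cof[OF that] unfolding approximates_def N_def by auto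
    then have "length (gl (Cof M)) \<le> N * length (Cof M)" by (rule gl_length)
    also have "\<dots> \<le> N * D" using Cof[OF that] by simp
    finally show "length (gl (Cof M)) \<le> (n + m) * D" unfolding N_def .
  qed
  have MB: "M \<in> carrier_mat n n" if "M \<in> B" for M using that unfolding B_def GL2_def by auto
  have inj: "inj_on f B"
  proof (rule inj_onI)
    fix M M' assume M: "M \<in> B" and M': "M' \<in> B" and e: "f M = f M'"
    show "M = M'"
      by (rule approx_unique[OF conjunct1[OF Cof[OF M]] conjunct1[OF Cof[OF M']] MB[OF M] MB[OF M'] _ d k bC[OF M] bC[OF M'] s])
        (use e in \<open>simp add: f_def\<close>)
  qed
  have fT: "f ` B \<subseteq> T"
  proof
    fix r assume "r \<in> f ` B"
    then obtain M where M: "M \<in> B" and r: "r = f M" by auto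
    have c: "is_circuit N (Cof M)" using Cof[OF M] unfolding approximates_def N_def by auto
    have "length r \<le> D" using Cof[OF M] unfolding r f_def rcirc_def by simp
    moreover have "set r \<subseteq> LS"
    proof
      fix l assume "l \<in> set r"
      then obtain L where L: "L \<in> set (Cof M)" and l: "l = map (\<lambda>(Q, G). rnd_mat \<delta> k G) L"
        unfolding r f_def rcirc_def by auto
      have lay: "is_layer N L" using c L unfolding is_circuit_def by auto
      have "length l \<le> N" using layer_length[OF lay] l by simp
      moreover have "set l \<subseteq> RG N \<delta> k"
      proof
        fix A assume "A \<in> set l"
        then obtain Q G where QG: "(Q, G) \<in> set L" and A: "A = rnd_mat \<delta> k G" using l by auto
        have "gate_on N Q G" using lay QG by (rule is_layer_gate)
        then show "A \<in> RG N \<delta> k" unfolding A using k0 by (rule gate_rnd_RG)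
      qed
      ultimately show "l \<in> LS" unfolding LS_def by simp
    qed
    ultimately show "r \<in> T" unfolding T_def by simp
  qed
  have "card B \<le> card T" using card_inj_on_le[OF inj fT Tf] .
  also have "\<dots> \<le> (card LS + 1) ^ D" by (rule Tc)
  also have "\<dots> \<le> ((card (RG N \<delta> k) + 1) ^ N + 1) ^ D" using LSc by (intro power_mono) auto
  finally show ?thesis unfolding B_def N_def .
qed


definition loc :: "nat \<Rightarrow> nat set \<Rightarrow> complex mat \<Rightarrow> bool" where
  "loc N S A \<longleftrightarrow> A \<in> carrier_mat (2 ^ N) (2 ^ N) \<and>
     (\<forall>x y. x < 2 ^ N \<longrightarrow> y < 2 ^ N \<longrightarrow> \<not> agree N S x y \<longrightarrow> A $$ (x, y) = 0) \<and>
     (\<forall>x y x' y'. x < 2 ^ N \<longrightarrow> y < 2 ^ N \<longrightarrow> x' < 2 ^ N \<longrightarrow> y' < 2 ^ N \<longrightarrow>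
        agree N S x y \<longrightarrow> agree N S x' y' \<longrightarrow> (\<forall>i\<in>S. bit x i = bit x' i) \<longrightarrow> (\<forall>i\<in>S. bit y i = bit y' i) \<longrightarrow>
        A $$ (x, y) = A $$ (x', y'))"

lemma locI:
  assumes "A \<in> carrier_mat (2 ^ N) (2 ^ N)"
    "\<And>x y. x < 2 ^ N \<Longrightarrow> y < 2 ^ N \<Longrightarrow> \<not> agree N S x y \<Longrightarrow> A $$ (x, y) = 0"
    "\<And>x y x' y'. x < 2 ^ N \<Longrightarrow> y < 2 ^ N \<Longrightarrow> x' < 2 ^ N \<Longrightarrow> y' < 2 ^ N \<Longrightarrow>
        agree N S x y \<Longrightarrow> agree N S x' y' \<Longrightarrow> (\<And>i. i \<in> S \<Longrightarrow> bit x i = bit x' i) \<Longrightarrow> (\<And>i. i \<in> S \<Longrightarrow> bit y i = bit y' i) \<Longrightarrow>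
        A $$ (x, y) = A $$ (x', y')"
  shows "loc N S A"
  unfolding loc_def using assms by blast

lemma locD:
  assumes "loc N S A"
  shows "A \<in> carrier_mat (2 ^ N) (2 ^ N)"
    "\<And>x y. x < 2 ^ N \<Longrightarrow> y < 2 ^ N \<Longrightarrow> \<not> agree N S x y \<Longrightarrow> A $$ (x, y) = 0"
    "\<And>x y x' y'. x < 2 ^ N \<Longrightarrow> y < 2 ^ N \<Longrightarrow> x' < 2 ^ N \<Longrightarrow> y' < 2 ^ N \<Longrightarrow>
        agree N S x y \<Longrightarrow> agree N S x' y' \<Longrightarrow> (\<And>i. i \<in> S \<Longrightarrow> bit x i = bit x' i) \<Longrightarrow> (\<And>i. i \<in> S \<Longrightarrow> bit y i = bit y' i) \<Longrightarrow>
        A $$ (x, y) = A $$ (x', y')"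
  using assms unfolding loc_def by blast+

lemma agree_mono: "agree N S x y \<Longrightarrow> S \<subseteq> S' \<Longrightarrow> agree N S' x y"
  unfolding agree_def by blast

lemma loc_mono:
  assumes A: "loc N S A" and sub: "S \<subseteq> S'"
  shows "loc N S' A"
proof (rule locI)
  show "A \<in> carrier_mat (2 ^ N) (2 ^ N)" by (rule locD(1)[OF A])
  fix x y assume x: "x < 2 ^ N" and y: "y < 2 ^ N" and n: "\<not> agree N S' x y"
  then show "A $$ (x, y) = 0" using locD(2)[OF A x y] agree_mono[OF _ sub] by blast
next
  fix x y x' y' assume x: "x < 2 ^ N" and y: "y < 2 ^ N" and x': "x' < 2 ^ N" and y': "y' < 2 ^ N"
    and a: "agree N S' x y" and a': "agree N S' x' y'"
    and ex: "\<And>i. i \<in> S' \<Longrightarrow> bit x i = bit x' i" and ey: "\<And>i. i \<in> S' \<Longrightarrow> bit y i = bit y' i"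
  have iff: "agree N S x y \<longleftrightarrow> agree N S x' y'"
  proof -
    have "(bit x i = bit y i) \<longleftrightarrow> (bit x' i = bit y' i)" if "i < N" "i \<notin> S" for i
    proof (cases "i \<in> S'")
      case True
      then show ?thesis using ex ey by simp
    next
      case False
      then show ?thesis using a a' that unfolding agree_def by blast
    qed
    then show ?thesis unfolding agree_def by blast
  qed
  show "A $$ (x, y) = A $$ (x', y')"
  proof (cases "agree N S x y")
    case True
    then show ?thesis using iff locD(3)[OF A x y x' y'] ex ey sub by blast
  next
    case False
    then have "A $$ (x, y) = 0" "A $$ (x', y') = 0" using iff locD(2)[OF A x y] locD(2)[OF A x' y'] by blast+
    then show ?thesis by simp
  qed
qed

lemma gate_loc: "gate_on N Q G \<Longrightarrow> loc N Q G"
  by (intro locI gate_carrier gate_zero gate_eq) auto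

lemma adj_loc:
  assumes A: "loc N S A"
  shows "loc N S (mat_adjoint A)"
proof (rule locI)
  have Ac: "A \<in> carrier_mat (2 ^ N) (2 ^ N)" by (rule locD(1)[OF A])
  then show "mat_adjoint A \<in> carrier_mat (2 ^ N) (2 ^ N)" by (rule mat_adjoint_carrier)
  have e: "mat_adjoint A $$ (x, y) = cnj (A $$ (y, x))" if "x < 2 ^ N" "y < 2 ^ N" for x y
    using Ac that by (simp add: index_mat_adjoint)
  fix x y assume x: "x < 2 ^ N" and y: "y < 2 ^ N" and n: "\<not> agree N S x y"
  then have "\<not> agree N S y x" using agree_sym by blast
  then show "mat_adjoint A $$ (x, y) = 0" using e[OF x y] locD(2)[OF A y x] by simp
next
  have Ac: "A \<in> carrier_mat (2 ^ N) (2 ^ N)" by (rule locD(1)[OF A])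
  have e: "mat_adjoint A $$ (x, y) = cnj (A $$ (y, x))" if "x < 2 ^ N" "y < 2 ^ N" for x y
    using Ac that by (simp add: index_mat_adjoint)
  fix x y x' y' assume x: "x < 2 ^ N" and y: "y < 2 ^ N" and x': "x' < 2 ^ N" and y': "y' < 2 ^ N"
    and a: "agree N S x y" and a': "agree N S x' y'"
    and ex: "\<And>i. i \<in> S \<Longrightarrow> bit x i = bit x' i" and ey: "\<And>i. i \<in> S \<Longrightarrow> bit y i = bit y' i"
  have "A $$ (y, x) = A $$ (y', x')"
    by (rule locD(3)[OF A y x y' x' agree_sym[OF a] agree_sym[OF a'] ey ex])
  then show "mat_adjoint A $$ (x, y) = mat_adjoint A $$ (x', y')" using e x y x' y' by simp
qed

definition proj :: "nat \<Rightarrow> nat \<Rightarrow> complex mat" where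
  "proj N i = mat (2 ^ N) (2 ^ N) (\<lambda>(x, y). if x = y \<and> bit x i then 1 else 0)"

lemma agree_eq_iff:
  assumes "x < 2 ^ N" "y < 2 ^ N" "agree N {i} x y"
  shows "x = y \<longleftrightarrow> bit x i = bit y i"
proof
  assume "bit x i = bit y i"
  then show "x = y" using assms unfolding agree_def by (intro nat_bits_eq[OF assms(1,2)]) blast
qed simp

lemma proj_loc: "loc N {i} (proj N i)"
proof (rule locI)
  show "proj N i \<in> carrier_mat (2 ^ N) (2 ^ N)" unfolding proj_def by simp
  fix x y assume x: "x < 2 ^ N" and y: "y < 2 ^ N" and n: "\<not> agree N {i} x y"
  then have "x \<noteq> y" unfolding agree_def by blast
  then show "proj N i $$ (x, y) = 0" using x y unfolding proj_def by simp
next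
  fix x y x' y' assume x: "x < 2 ^ N" and y: "y < 2 ^ N" and x': "x' < 2 ^ N" and y': "y' < 2 ^ N"
    and a: "agree N {i} x y" and a': "agree N {i} x' y'"
    and ex: "\<And>j. j \<in> {i} \<Longrightarrow> bit x j = bit x' j" and ey: "\<And>j. j \<in> {i} \<Longrightarrow> bit y j = bit y' j"
  have "x = y \<longleftrightarrow> x' = y'" using agree_eq_iff[OF x y a] agree_eq_iff[OF x' y' a'] ex ey by simp
  moreover have "bit x i = bit x' i" using ex by simp
  ultimately show "proj N i $$ (x, y) = proj N i $$ (x', y')" using x y x' y' unfolding proj_def by simp
qed


definition mixn :: "nat \<Rightarrow> nat set \<Rightarrow> nat \<Rightarrow> nat \<Rightarrow> nat" where
  "mixn N W a b = mk N (\<lambda>i. if i \<in> W then bit a i else bit b i)"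

lemma mixn_less: "mixn N W a b < 2 ^ N" unfolding mixn_def by (rule mk_less)

lemma bit_mixn: "i < N \<Longrightarrow> bit (mixn N W a b) i = (if i \<in> W then bit a i else bit b i)"
  unfolding mixn_def bit_mk by simp

lemma mult_entry:
  assumes "A \<in> carrier_mat D D" "B \<in> carrier_mat D D" "x < D" "y < D"
  shows "(A * B) $$ (x, y) = (\<Sum>z<D. A $$ (x, z) * B $$ (z, y))"
proof -
  have "(A * B) $$ (x, y) = row A x \<bullet> col B y" using assms by simp
  also have "\<dots> = (\<Sum>z<D. A $$ (x, z) * B $$ (z, y))"
    unfolding scalar_prod_def using assms by (auto simp: atLeast0LessThan intro!: sum.cong)
  finally show ?thesis .
qed

lemma mult_loc_zero:
  assumes A: "loc N S A" and B: "loc N T B" and x: "x < 2 ^ N" and y: "y < 2 ^ N"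
    and n: "\<not> agree N (S \<union> T) x y"
  shows "(A * B) $$ (x, y) = 0"
proof -
  have Ac: "A \<in> carrier_mat (2 ^ N) (2 ^ N)" and Bc: "B \<in> carrier_mat (2 ^ N) (2 ^ N)" using locD(1) A B by auto
  have "A $$ (x, z) * B $$ (z, y) = 0" if z: "z < 2 ^ N" for z
  proof (rule ccontr)
    assume "A $$ (x, z) * B $$ (z, y) \<noteq> 0"
    then have "A $$ (x, z) \<noteq> 0" "B $$ (z, y) \<noteq> 0" by auto
    then have "agree N S x z" "agree N T z y" using locD(2)[OF A x z] locD(2)[OF B z y] by auto
    then have "agree N (S \<union> T) x y" unfolding agree_def by auto
    then show False using n by simp
  qed
  then have "(\<Sum>z<2 ^ N. A $$ (x, z) * B $$ (z, y)) = 0" by (intro sum.neutral) auto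
  then show ?thesis using mult_entry[OF Ac Bc x y] by simp
qed

lemma mult_loc:
  assumes A: "loc N S A" and B: "loc N T B"
  shows "loc N (S \<union> T) (A * B)"
proof (rule locI)
  have Ac: "A \<in> carrier_mat (2 ^ N) (2 ^ N)" and Bc: "B \<in> carrier_mat (2 ^ N) (2 ^ N)" using locD(1) A B by auto
  show "A * B \<in> carrier_mat (2 ^ N) (2 ^ N)" using Ac Bc by simp
  show "\<And>x y. x < 2 ^ N \<Longrightarrow> y < 2 ^ N \<Longrightarrow> \<not> agree N (S \<union> T) x y \<Longrightarrow> (A * B) $$ (x, y) = 0"
    by (rule mult_loc_zero[OF A B])
next
  have Ac: "A \<in> carrier_mat (2 ^ N) (2 ^ N)" and Bc: "B \<in> carrier_mat (2 ^ N) (2 ^ N)" using locD(1) A B by auto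
  define W where "W = S \<union> T"
  fix x y x' y' assume x: "x < 2 ^ N" and y: "y < 2 ^ N" and x': "x' < 2 ^ N" and y': "y' < 2 ^ N"
    and a: "agree N (S \<union> T) x y" and a': "agree N (S \<union> T) x' y'"
    and ex: "\<And>i. i \<in> S \<union> T \<Longrightarrow> bit x i = bit x' i" and ey: "\<And>i. i \<in> S \<union> T \<Longrightarrow> bit y i = bit y' i"
  define Z where "Z = {z. z < 2 ^ N \<and> agree N W x z}"
  define Z' where "Z' = {z. z < 2 ^ N \<and> agree N W x' z}"
  define f where "f z = A $$ (x, z) * B $$ (z, y)" for z
  define f' where "f' z = A $$ (x', z) * B $$ (z, y')" for z
  define \<phi> where "\<phi> z = mixn N W z x'" for z
  define \<psi> where "\<psi> z = mixn N W z x" for z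
  have fz: "f z = 0" if "z < 2 ^ N" "z \<notin> Z" for z
  proof (rule ccontr)
    assume "f z \<noteq> 0"
    then have "A $$ (x, z) \<noteq> 0" unfolding f_def by auto
    then have "agree N S x z" using locD(2)[OF A x that(1)] by auto
    then have "agree N W x z" unfolding W_def by (rule agree_mono) auto
    then show False using that unfolding Z_def by auto
  qed
  have fz': "f' z = 0" if "z < 2 ^ N" "z \<notin> Z'" for z
  proof (rule ccontr)
    assume "f' z \<noteq> 0"
    then have "A $$ (x', z) \<noteq> 0" unfolding f'_def by auto
    then have "agree N S x' z" using locD(2)[OF A x' that(1)] by auto
    then have "agree N W x' z" unfolding W_def by (rule agree_mono) auto
    then show False using that unfolding Z'_def by auto
  qed
  have s1: "(\<Sum>z<2 ^ N. f z) = (\<Sum>z\<in>Z. f z)"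
    by (rule sum.mono_neutral_right) (auto simp: Z_def fz)
  have s2: "(\<Sum>z<2 ^ N. f' z) = (\<Sum>z\<in>Z'. f' z)"
    by (rule sum.mono_neutral_right) (auto simp: Z'_def fz')
  have bphi: "bit (\<phi> z) i = (if i \<in> W then bit z i else bit x' i)" if "i < N" for z i
    unfolding \<phi>_def using that by (rule bit_mixn)
  have bpsi: "bit (\<psi> z) i = (if i \<in> W then bit z i else bit x i)" if "i < N" for z i
    unfolding \<psi>_def using that by (rule bit_mixn)
  have phiN: "\<phi> z < 2 ^ N" for z unfolding \<phi>_def by (rule mixn_less)
  have psiN: "\<psi> z < 2 ^ N" for z unfolding \<psi>_def by (rule mixn_less)
  have bij: "bij_betw \<phi> Z Z'"
  proof (rule bij_betw_byWitness[where f'=\<psi>])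
    show "\<forall>a\<in>Z. \<psi> (\<phi> a) = a"
    proof
      fix z assume z: "z \<in> Z"
      show "\<psi> (\<phi> z) = z"
        by (rule nat_bits_eq[of _ N]) (use z in \<open>auto simp: Z_def psiN bpsi bphi agree_def\<close>)
    qed
    show "\<forall>a\<in>Z'. \<phi> (\<psi> a) = a"
    proof
      fix z assume z: "z \<in> Z'"
      show "\<phi> (\<psi> z) = z"
        by (rule nat_bits_eq[of _ N]) (use z in \<open>auto simp: Z'_def phiN bpsi bphi agree_def\<close>)
    qed
    show "\<phi> ` Z \<subseteq> Z'" by (auto simp: Z'_def \<phi>_def mixn_less agree_def bit_mixn)
    show "\<psi> ` Z' \<subseteq> Z" by (auto simp: Z_def \<psi>_def mixn_less agree_def bit_mixn)
  qed
  have fe: "f z = f' (\<phi> z)" if z: "z \<in> Z" for z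
  proof -
    have zN: "z < 2 ^ N" and zx: "agree N W x z" using z unfolding Z_def by auto
    have pN: "\<phi> z < 2 ^ N" unfolding \<phi>_def by (rule mixn_less)
    have sameW: "bit z i = bit (\<phi> z) i" if "i \<in> W" for i
    proof (cases "i < N")
      case True then show ?thesis using bphi that by simp
    next
      case False then show ?thesis using bit_ge[OF zN] bit_ge[OF pN] by simp
    qed
    have offW: "bit (\<phi> z) i = bit x' i" if "i < N" "i \<notin> W" for i using bphi that by simp
    have offWz: "bit z i = bit x i" if "i < N" "i \<notin> W" for i using zx that unfolding agree_def by simp
    have e1: "A $$ (x, z) = A $$ (x', \<phi> z)"
    proof -
      have iff: "agree N S x z \<longleftrightarrow> agree N S x' (\<phi> z)"
      proof -
        have "(bit x i = bit z i) \<longleftrightarrow> (bit x' i = bit (\<phi> z) i)" if "i < N" "i \<notin> S" for i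
        proof (cases "i \<in> W")
          case True then show ?thesis using ex sameW W_def by simp
        next
          case False then show ?thesis using offW offWz that by simp
        qed
        then show ?thesis unfolding agree_def by blast
      qed
      show ?thesis
      proof (cases "agree N S x z")
        case True
        then show ?thesis using iff locD(3)[OF A x zN x' pN] ex sameW unfolding W_def by blast
      next
        case False
        then have "A $$ (x, z) = 0" "A $$ (x', \<phi> z) = 0" using iff locD(2)[OF A x zN] locD(2)[OF A x' pN] by blast+
        then show ?thesis by simp
      qed
    qed
    have e2: "B $$ (z, y) = B $$ (\<phi> z, y')"
    proof -
      have iff: "agree N T z y \<longleftrightarrow> agree N T (\<phi> z) y'"
      proof -
        have "(bit z i = bit y i) \<longleftrightarrow> (bit (\<phi> z) i = bit y' i)" if "i < N" "i \<notin> T" for i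
        proof (cases "i \<in> W")
          case True then show ?thesis using ey sameW W_def by simp
        next
          case False
          have "bit x i = bit y i" "bit x' i = bit y' i" using a a' False that unfolding agree_def W_def by auto
          then show ?thesis using offW offWz that False by simp
        qed
        then show ?thesis unfolding agree_def by blast
      qed
      show ?thesis
      proof (cases "agree N T z y")
        case True
        then show ?thesis using iff locD(3)[OF B zN y pN y'] ey sameW unfolding W_def by blast
      next
        case False
        then have "B $$ (z, y) = 0" "B $$ (\<phi> z, y') = 0" using iff locD(2)[OF B zN y] locD(2)[OF B pN y'] by blast+
        then show ?thesis by simp
      qed
    qed
    show ?thesis unfolding f_def f'_def using e1 e2 by simp
  qed
  have "(A * B) $$ (x, y) = (\<Sum>z<2 ^ N. f z)" unfolding f_def by (rule mult_entry[OF Ac Bc x y])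
  also have "\<dots> = (\<Sum>z\<in>Z. f' (\<phi> z))" using s1 fe by simp
  also have "\<dots> = (\<Sum>z\<in>Z'. f' z)" by (rule sum.reindex_bij_betw[OF bij])
  also have "\<dots> = (\<Sum>z<2 ^ N. f' z)" using s2 by simp
  also have "\<dots> = (A * B) $$ (x', y')" unfolding f'_def by (rule mult_entry[OF Ac Bc x' y', symmetric])
  finally show "(A * B) $$ (x, y) = (A * B) $$ (x', y')" .
qed


lemma sum_single_nat:
  fixes D z0 :: nat
  assumes "z0 < D" "\<And>z. z < D \<Longrightarrow> z \<noteq> z0 \<Longrightarrow> f z = 0"
  shows "(\<Sum>z<D. f z) = (f z0 :: complex)"
proof -
  have "(\<Sum>z<D. f z) = (\<Sum>z\<in>{z0}. f z)"
    by (rule sum.mono_neutral_right) (use assms in auto)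
  then show ?thesis by simp
qed

lemma loc_commute:
  assumes A: "loc N S A" and B: "loc N T B" and d: "S \<inter> T = {}"
  shows "A * B = B * A"
proof -
  have Ac: "A \<in> carrier_mat (2 ^ N) (2 ^ N)" and Bc: "B \<in> carrier_mat (2 ^ N) (2 ^ N)" using locD(1) A B by auto
  show ?thesis
  proof (rule eq_matI)
    show "dim_row (A * B) = dim_row (B * A)" "dim_col (A * B) = dim_col (B * A)" using Ac Bc by auto
    fix x y assume "x < dim_row (B * A)" "y < dim_col (B * A)"
    then have x: "x < 2 ^ N" and y: "y < 2 ^ N" using Ac Bc by auto
    show "(A * B) $$ (x, y) = (B * A) $$ (x, y)"
    proof (cases "agree N (S \<union> T) x y")
      case False
      then have "\<not> agree N (T \<union> S) x y" by (simp add: Un_commute)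
      then show ?thesis using mult_loc_zero[OF A B x y False] mult_loc_zero[OF B A x y] by simp
    next
      case True
      define z0 where "z0 = mixn N S y x"
      define w0 where "w0 = mixn N T y x"
      have z0N: "z0 < 2 ^ N" and w0N: "w0 < 2 ^ N" unfolding z0_def w0_def by (rule mixn_less)+
      have bz: "bit z0 i = (if i \<in> S then bit y i else bit x i)" if "i < N" for i
        unfolding z0_def using that by (rule bit_mixn)
      have bw: "bit w0 i = (if i \<in> T then bit y i else bit x i)" if "i < N" for i
        unfolding w0_def using that by (rule bit_mixn)
      have xy: "bit x i = bit y i" if "i < N" "i \<notin> S" "i \<notin> T" for i
        using True that unfolding agree_def by auto
      have e1: "(A * B) $$ (x, y) = A $$ (x, z0) * B $$ (z0, y)"
      proof -
        have "(A * B) $$ (x, y) = (\<Sum>z<2 ^ N. A $$ (x, z) * B $$ (z, y))" by (rule mult_entry[OF Ac Bc x y])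
        also have "\<dots> = A $$ (x, z0) * B $$ (z0, y)"
        proof (rule sum_single_nat[OF z0N])
          fix z assume z: "z < 2 ^ N" "z \<noteq> z0"
          show "A $$ (x, z) * B $$ (z, y) = 0"
          proof (rule ccontr)
            assume "A $$ (x, z) * B $$ (z, y) \<noteq> 0"
            then have "A $$ (x, z) \<noteq> 0" "B $$ (z, y) \<noteq> 0" by auto
            then have a1: "agree N S x z" and a2: "agree N T z y"
              using locD(2)[OF A x z(1)] locD(2)[OF B z(1) y] by auto
            have "z = z0"
            proof (rule nat_bits_eq[OF z(1) z0N])
              fix i assume i: "i < N"
              show "bit z i = bit z0 i"
              proof (cases "i \<in> S")
                case True
                then have "i \<notin> T" using d by auto
                then show ?thesis using a2 i True bz unfolding agree_def by auto
              next
                case False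
                then show ?thesis using a1 i bz unfolding agree_def by auto
              qed
            qed
            then show False using z by simp
          qed
        qed
        finally show ?thesis .
      qed
      have e2: "(B * A) $$ (x, y) = B $$ (x, w0) * A $$ (w0, y)"
      proof -
        have "(B * A) $$ (x, y) = (\<Sum>z<2 ^ N. B $$ (x, z) * A $$ (z, y))" by (rule mult_entry[OF Bc Ac x y])
        also have "\<dots> = B $$ (x, w0) * A $$ (w0, y)"
        proof (rule sum_single_nat[OF w0N])
          fix z assume z: "z < 2 ^ N" "z \<noteq> w0"
          show "B $$ (x, z) * A $$ (z, y) = 0"
          proof (rule ccontr)
            assume "B $$ (x, z) * A $$ (z, y) \<noteq> 0"
            then have "B $$ (x, z) \<noteq> 0" "A $$ (z, y) \<noteq> 0" by auto
            then have a1: "agree N T x z" and a2: "agree N S z y"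
              using locD(2)[OF B x z(1)] locD(2)[OF A z(1) y] by auto
            have "z = w0"
            proof (rule nat_bits_eq[OF z(1) w0N])
              fix i assume i: "i < N"
              show "bit z i = bit w0 i"
              proof (cases "i \<in> T")
                case True
                then have "i \<notin> S" using d by auto
                then show ?thesis using a2 i True bw unfolding agree_def by auto
              next
                case False
                then show ?thesis using a1 i bw unfolding agree_def by auto
              qed
            qed
            then show False using z by simp
          qed
        qed
        finally show ?thesis .
      qed
      have A1: "A $$ (x, z0) = A $$ (w0, y)"
      proof (rule locD(3)[OF A x z0N w0N y])
        show "agree N S x z0" unfolding agree_def using bz by auto
        show "agree N S w0 y" unfolding agree_def using bw xy by auto
        fix i assume i: "i \<in> S"
        then have iT: "i \<notin> T" using d by auto
        show "bit x i = bit w0 i"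
        proof (cases "i < N")
          case True then show ?thesis using bw iT by simp
        next
          case False then show ?thesis using bit_ge[OF x] bit_ge[OF w0N] by simp
        qed
        show "bit z0 i = bit y i"
        proof (cases "i < N")
          case True then show ?thesis using bz i by simp
        next
          case False then show ?thesis using bit_ge[OF y] bit_ge[OF z0N] by simp
        qed
      qed
      have B1: "B $$ (z0, y) = B $$ (x, w0)"
      proof (rule locD(3)[OF B z0N y x w0N])
        show "agree N T z0 y" unfolding agree_def using bz xy by auto
        show "agree N T x w0" unfolding agree_def using bw by auto
        fix i assume i: "i \<in> T"
        then have iS: "i \<notin> S" using d by auto
        show "bit z0 i = bit x i"
        proof (cases "i < N")
          case True then show ?thesis using bz iS by simp
        next
          case False then show ?thesis using bit_ge[OF x] bit_ge[OF z0N] by simp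
        qed
        show "bit y i = bit w0 i"
        proof (cases "i < N")
          case True then show ?thesis using bw i by simp
        next
          case False then show ?thesis using bit_ge[OF y] bit_ge[OF w0N] by simp
        qed
      qed
      show ?thesis unfolding e1 e2 A1 B1 by simp
    qed
  qed
qed


lemma mult_entry2:
  assumes "A \<in> carrier_mat a b" "B \<in> carrier_mat b c" "x < a" "y < c"
  shows "(A * B) $$ (x, y) = (\<Sum>z<b. A $$ (x, z) * B $$ (z, y))"
proof -
  have "(A * B) $$ (x, y) = row A x \<bullet> col B y" using assms by simp
  also have "\<dots> = (\<Sum>z<b. A $$ (x, z) * B $$ (z, y))"
    unfolding scalar_prod_def using assms by (auto simp: atLeast0LessThan intro!: sum.cong)
  finally show ?thesis .
qed

lemma adj_mult:
  fixes A B :: "complex mat"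
  assumes A: "A \<in> carrier_mat n k" and B: "B \<in> carrier_mat k l"
  shows "mat_adjoint (A * B) = mat_adjoint B * mat_adjoint A"
proof (rule eq_matI)
  have aA: "mat_adjoint A \<in> carrier_mat k n" and aB: "mat_adjoint B \<in> carrier_mat l k"
    using mat_adjoint_carrier A B by auto
  show "dim_row (mat_adjoint (A * B)) = dim_row (mat_adjoint B * mat_adjoint A)"
    "dim_col (mat_adjoint (A * B)) = dim_col (mat_adjoint B * mat_adjoint A)"
    using A B aA aB by (auto simp: index_mat_adjoint)
  fix i j assume "i < dim_row (mat_adjoint B * mat_adjoint A)" "j < dim_col (mat_adjoint B * mat_adjoint A)"
  then have i: "i < l" and j: "j < n" using aA aB by auto
  have "mat_adjoint (A * B) $$ (i, j) = cnj ((A * B) $$ (j, i))"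
    using A B i j by (simp add: index_mat_adjoint)
  also have "\<dots> = cnj (\<Sum>z<k. A $$ (j, z) * B $$ (z, i))" by (simp add: mult_entry2[OF A B j i])
  also have "\<dots> = (\<Sum>z<k. mat_adjoint B $$ (i, z) * mat_adjoint A $$ (z, j))"
    using A B i j by (simp add: index_mat_adjoint cnj_sum mult.commute)
  also have "\<dots> = (mat_adjoint B * mat_adjoint A) $$ (i, j)" by (rule mult_entry2[OF aB aA i j, symmetric])
  finally show "mat_adjoint (A * B) $$ (i, j) = (mat_adjoint B * mat_adjoint A) $$ (i, j)" .
qed

lemma adj_one: "mat_adjoint (1\<^sub>m D :: complex mat) = 1\<^sub>m D"
  by (rule eq_matI) (auto simp: index_mat_adjoint)

definition cj :: "complex mat \<Rightarrow> complex mat \<Rightarrow> complex mat" where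
  "cj A X = mat_adjoint X * A * X"

lemma cj_carrier: "A \<in> carrier_mat D D \<Longrightarrow> X \<in> carrier_mat D D \<Longrightarrow> cj A X \<in> carrier_mat D D"
proof -
  assume A: "A \<in> carrier_mat D D" and X: "X \<in> carrier_mat D D"
  have a: "mat_adjoint X \<in> carrier_mat D D" using mat_adjoint_carrier[OF X] .
  show ?thesis unfolding cj_def by (rule mult_carrier_mat[OF mult_carrier_mat[OF a A] X])
qed

lemma cj_mult:
  assumes A: "A \<in> carrier_mat D D" and X: "X \<in> carrier_mat D D" and Y: "Y \<in> carrier_mat D D"
  shows "cj A (X * Y) = cj (cj A X) Y"
proof -
  have aX: "mat_adjoint X \<in> carrier_mat D D" and aY: "mat_adjoint Y \<in> carrier_mat D D"
    using mat_adjoint_carrier X Y by auto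
  have "cj A (X * Y) = mat_adjoint Y * mat_adjoint X * A * (X * Y)"
    unfolding cj_def adj_mult[OF X Y] ..
  also have "\<dots> = mat_adjoint Y * (mat_adjoint X * A * X) * Y"
    using aX aY A X Y by (simp add: assoc_mult_mat[of _ D D _ D _ D])
  also have "\<dots> = cj (cj A X) Y" unfolding cj_def ..
  finally show ?thesis .
qed

lemma cj_one: "A \<in> carrier_mat D D \<Longrightarrow> cj A (1\<^sub>m D) = A"
  unfolding cj_def adj_one by simp

lemma cj_gate:
  assumes g: "gate_on N Q G" and A: "loc N S A"
  shows "loc N (if Q \<inter> S = {} then S else S \<union> Q) (cj A G)"
proof (cases "Q \<inter> S = {}")
  case True
  have Gc: "G \<in> carrier_mat (2 ^ N) (2 ^ N)" by (rule gate_carrier[OF g])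
  have Ac: "A \<in> carrier_mat (2 ^ N) (2 ^ N)" by (rule locD(1)[OF A])
  have aG: "mat_adjoint G \<in> carrier_mat (2 ^ N) (2 ^ N)" using mat_adjoint_carrier Gc by auto
  have com: "A * G = G * A" using loc_commute[OF A gate_loc[OF g]] True by blast
  have uni: "mat_adjoint G * G = 1\<^sub>m (2 ^ N)" using gate_unitary[OF g] unfolding unitary_mat_def by blast
  have "cj A G = mat_adjoint G * (A * G)" unfolding cj_def using aG Ac Gc by simp
  also have "\<dots> = mat_adjoint G * (G * A)" unfolding com ..
  also have "\<dots> = (mat_adjoint G * G) * A" using aG Ac Gc by simp
  also have "\<dots> = A" unfolding uni using Ac by simp
  finally show ?thesis using True A by simp
next
  case False
  have "loc N ((Q \<union> S) \<union> Q) (cj A G)"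
    unfolding cj_def by (intro mult_loc adj_loc gate_loc[OF g] A)
  moreover have "(Q \<union> S) \<union> Q \<subseteq> S \<union> Q" by auto
  ultimately have "loc N (S \<union> Q) (cj A G)" by (rule loc_mono)
  then show ?thesis using False by simp
qed

definition lc_step :: "(nat set \<times> complex mat) list \<Rightarrow> nat set \<Rightarrow> nat set" where
  "lc_step L S = S \<union> \<Union>{fst g | g. g \<in> set L \<and> fst g \<inter> S \<noteq> {}}"

definition LC :: "(nat set \<times> complex mat) list list \<Rightarrow> nat set \<Rightarrow> nat set" where
  "LC C S = foldr lc_step C S"

lemma is_layer_tail: "is_layer N (g # L) \<Longrightarrow> is_layer N L"
  unfolding is_layer_def
proof (intro conjI allI impI)
  assume a: "(\<forall>(Q, G)\<in>set (g # L). gate_on N Q G) \<and>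
    (\<forall>i<length (g # L). \<forall>j<length (g # L). i \<noteq> j \<longrightarrow> fst ((g # L) ! i) \<inter> fst ((g # L) ! j) = {})"
  show "\<forall>(Q, G)\<in>set L. gate_on N Q G" using a by auto
  fix i j assume "i < length L" "j < length L" "i \<noteq> j"
  then show "fst (L ! i) \<inter> fst (L ! j) = {}" using a[THEN conjunct2, rule_format, of "Suc i" "Suc j"] by simp
qed

lemma is_layer_head_disj: "is_layer N ((Q, G) # L) \<Longrightarrow> (Q', G') \<in> set L \<Longrightarrow> Q \<inter> Q' = {}"
proof -
  assume a: "is_layer N ((Q, G) # L)" and b: "(Q', G') \<in> set L"
  then obtain j where j: "j < length L" "L ! j = (Q', G')" by (auto simp: in_set_conv_nth)
  have "fst (((Q, G) # L) ! 0) \<inter> fst (((Q, G) # L) ! Suc j) = {}"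
    using a j unfolding is_layer_def by (metis Suc_mono length_Cons nat.distinct(1) zero_less_Suc)
  then show ?thesis using j by simp
qed

lemma layer_carrier: "is_layer N L \<Longrightarrow> layer_op N L \<in> carrier_mat (2 ^ N) (2 ^ N)"
  unfolding layer_prodl using is_layer_gate gate_carrier by (intro prodl_carrier) fastforce

lemma layer_cj:
  assumes "is_layer N L" "loc N S A"
  shows "loc N (lc_step L S) (cj A (layer_op N L))"
  using assms
proof (induction L arbitrary: S A)
  case Nil
  have "layer_op N [] = 1\<^sub>m (2 ^ N)" by (simp add: layer_op_def)
  then show ?case using Nil cj_one[OF locD(1)[OF Nil(2)]] by (simp add: lc_step_def)
next
  case (Cons g L)
  obtain Q G where g: "g = (Q, G)" by force
  have lay: "is_layer N L" using Cons.prems(1) by (rule is_layer_tail)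
  have gate: "gate_on N Q G" using Cons.prems(1) g is_layer_gate by auto
  define S1 where "S1 = (if Q \<inter> S = {} then S else S \<union> Q)"
  have l1: "loc N S1 (cj A G)" unfolding S1_def by (rule cj_gate[OF gate Cons.prems(2)])
  have lo: "layer_op N (g # L) = G * layer_op N L" unfolding g by (simp add: layer_op_def)
  have cj: "cj A (layer_op N (g # L)) = cj (cj A G) (layer_op N L)"
    unfolding lo by (rule cj_mult[OF locD(1)[OF Cons.prems(2)] gate_carrier[OF gate] layer_carrier[OF lay]])
  have IH: "loc N (lc_step L S1) (cj (cj A G) (layer_op N L))" by (rule Cons.IH[OF lay l1])
  have sub: "lc_step L S1 \<subseteq> lc_step (g # L) S"
  proof
    fix x assume "x \<in> lc_step L S1"
    then consider "x \<in> S1" | h where "h \<in> set L" "fst h \<inter> S1 \<noteq> {}" "x \<in> fst h"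
      unfolding lc_step_def by blast
    then show "x \<in> lc_step (g # L) S"
    proof cases
      case 1
      then show ?thesis unfolding S1_def lc_step_def g by (auto split: if_splits)
    next
      case 2
      have "Q \<inter> fst h = {}" using is_layer_head_disj[of N Q G L "fst h" "snd h"] Cons.prems(1) 2(1) g by simp
      then have "fst h \<inter> S \<noteq> {}" using 2(2) unfolding S1_def by (auto split: if_splits)
      moreover have "h \<in> set (g # L)" using 2(1) by simp
      ultimately have "fst h \<in> {fst g' | g'. g' \<in> set (g # L) \<and> fst g' \<inter> S \<noteq> {}}" by blast
      then show ?thesis unfolding lc_step_def using 2(3) by blast
    qed
  qed
  show ?case unfolding cj using loc_mono[OF IH sub] .
qed

lemma circ_cj:
  assumes "is_circuit N C" "loc N S A"
  shows "loc N (LC C S) (cj A (circuit_op N C))"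
  using assms
proof (induction C arbitrary: S A rule: rev_induct)
  case Nil
  then show ?case using cj_one[OF locD(1)[OF Nil(2)]] by (simp add: circuit_op_def LC_def)
next
  case (snoc L C)
  have cC: "is_circuit N C" and lL: "is_layer N L" using snoc.prems(1) unfolding is_circuit_def by auto
  have co: "circuit_op N (C @ [L]) = layer_op N L * circuit_op N C" by (simp add: circuit_op_def)
  have "cj A (circuit_op N (C @ [L])) = cj (cj A (layer_op N L)) (circuit_op N C)"
    unfolding co by (rule cj_mult[OF locD(1)[OF snoc.prems(2)] layer_carrier[OF lL] circ_carrier[OF cC]])
  moreover have "loc N (LC C (lc_step L S)) (cj (cj A (layer_op N L)) (circuit_op N C))"
    by (rule snoc.IH[OF cC layer_cj[OF lL snoc.prems(2)]])
  moreover have "LC C (lc_step L S) = LC (C @ [L]) S" by (simp add: LC_def)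
  ultimately show ?case by simp
qed


lemma layer_fst_unique:
  assumes "is_layer N L" "g \<in> set L" "g' \<in> set L" "s \<in> fst g" "s \<in> fst g'"
  shows "fst g = fst g'"
proof -
  obtain a where a: "a < length L" "L ! a = g" using assms(2) by (auto simp: in_set_conv_nth)
  obtain b where b: "b < length L" "L ! b = g'" using assms(3) by (auto simp: in_set_conv_nth)
  show ?thesis
  proof (cases "a = b")
    case True then show ?thesis using a b by simp
  next
    case False
    then have "fst (L ! a) \<inter> fst (L ! b) = {}" using assms(1) a b unfolding is_layer_def by blast
    then show ?thesis using a b assms(4,5) by auto
  qed
qed

lemma lc_step_card:
  assumes lay: "is_layer N L" and fS: "finite S"
  shows "finite (lc_step L S) \<and> card (lc_step L S) \<le> 3 * card S"
proof -
  define W where "W s = \<Union>{fst g | g. g \<in> set L \<and> s \<in> fst g}" for s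
  have gfin: "finite (fst g) \<and> card (fst g) \<le> 2" if "g \<in> set L" for g
  proof -
    have "gate_on N (fst g) (snd g)" using is_layer_gate[OF lay, of "fst g" "snd g"] that by simp
    then show ?thesis using gate_Q gate_card_Q finite_subset[of _ "{..<N}"] by blast
  qed
  have Ws: "finite (W s) \<and> card (W s) \<le> 2" for s
  proof (cases "\<exists>g\<in>set L. s \<in> fst g")
    case True
    then obtain g where g: "g \<in> set L" "s \<in> fst g" by blast
    have "W s = fst g" unfolding W_def using layer_fst_unique[OF lay g(1) _ g(2)] g by blast
    then show ?thesis using gfin[OF g(1)] by simp
  next
    case False
    then have "W s = {}" unfolding W_def by blast
    then show ?thesis by simp
  qed
  have sub: "lc_step L S \<subseteq> (\<Union>s\<in>S. insert s (W s))"
  proof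
    fix x assume "x \<in> lc_step L S"
    then consider "x \<in> S" | g where "g \<in> set L" "fst g \<inter> S \<noteq> {}" "x \<in> fst g"
      unfolding lc_step_def by blast
    then show "x \<in> (\<Union>s\<in>S. insert s (W s))"
    proof cases
      case 1 then show ?thesis by blast
    next
      case 2
      then obtain s where s: "s \<in> fst g" "s \<in> S" by blast
      have "x \<in> W s" unfolding W_def using 2 s by blast
      then show ?thesis using s by blast
    qed
  qed
  have fU: "finite (\<Union>s\<in>S. insert s (W s))" using fS Ws by blast
  have "card (lc_step L S) \<le> card (\<Union>s\<in>S. insert s (W s))" by (rule card_mono[OF fU sub])
  also have "\<dots> \<le> (\<Sum>s\<in>S. card (insert s (W s)))" by (rule card_UN_le[OF fS])
  also have "\<dots> \<le> (\<Sum>s\<in>S. 3)"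
  proof (rule sum_mono)
    fix s show "card (insert s (W s)) \<le> 3" using Ws[of s] by (simp add: card_insert_if)
  qed
  also have "\<dots> = 3 * card S" by simp
  finally show ?thesis using finite_subset[OF sub fU] by simp
qed

lemma LC_card:
  assumes "is_circuit N C" "finite S"
  shows "finite (LC C S) \<and> card (LC C S) \<le> 3 ^ length C * card S"
  using assms(1)
proof (induction C)
  case Nil
  then show ?case using assms(2) by (simp add: LC_def)
next
  case (Cons L C)
  have lL: "is_layer N L" and cC: "is_circuit N C" using Cons.prems unfolding is_circuit_def by auto
  have IH: "finite (LC C S) \<and> card (LC C S) \<le> 3 ^ length C * card S" by (rule Cons.IH[OF cC])
  have e: "LC (L # C) S = lc_step L (LC C S)" by (simp add: LC_def)
  have h: "finite (lc_step L (LC C S)) \<and> card (lc_step L (LC C S)) \<le> 3 * card (LC C S)"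
    by (rule lc_step_card[OF lL]) (use IH in simp)
  then show ?case unfolding e using IH by auto
qed

definition p1 :: "nat \<Rightarrow> nat \<Rightarrow> complex vec \<Rightarrow> real" where
  "p1 N i \<psi> = (\<Sum>z\<in>{z. z < 2 ^ N \<and> bit z i}. (cmod (\<psi> $ z))\<^sup>2)"

lemma cnj_mult_self: "cnj z * z = complex_of_real ((cmod z)\<^sup>2)"
  using complex_norm_square[of z] by (simp only: mult.commute)

lemma mat_vec_unit:
  fixes U :: "complex mat"
  assumes "U \<in> carrier_mat D D" "x < D" "w < D"
  shows "(U *\<^sub>v unit_vec D x) $ w = U $$ (w, x)"
proof -
  have "(U *\<^sub>v unit_vec D x) $ w = (\<Sum>j<D. U $$ (w, j) * unit_vec D x $ j)"
    by (rule mult_mat_vec_sum[OF assms(1) _ assms(3)]) simp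
  also have "\<dots> = U $$ (w, x) * unit_vec D x $ x"
    by (rule sum_single_nat[OF assms(2)]) (use assms in simp)
  also have "\<dots> = U $$ (w, x)" using assms by simp
  finally show ?thesis .
qed

lemma p1_cj:
  assumes U: "U \<in> carrier_mat (2 ^ N) (2 ^ N)" and x: "x < 2 ^ N"
  shows "cj (proj N i) U $$ (x, x) = complex_of_real (p1 N i (U *\<^sub>v unit_vec (2 ^ N) x))"
proof -
  define D where "D = (2::nat) ^ N"
  have U': "U \<in> carrier_mat D D" and x': "x < D" using U x unfolding D_def by auto
  have aU: "mat_adjoint U \<in> carrier_mat D D" using mat_adjoint_carrier[OF U'] .
  have P: "proj N i \<in> carrier_mat D D" unfolding proj_def D_def by simp
  have aUP: "mat_adjoint U * proj N i \<in> carrier_mat D D" using aU P by simp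
  have e1: "(mat_adjoint U * proj N i) $$ (x, w) = (if bit w i then cnj (U $$ (w, x)) else 0)" if w: "w < D" for w
  proof -
    have "(mat_adjoint U * proj N i) $$ (x, w) = (\<Sum>z<D. mat_adjoint U $$ (x, z) * proj N i $$ (z, w))"
      by (rule mult_entry2[OF aU P x' w])
    also have "\<dots> = mat_adjoint U $$ (x, w) * proj N i $$ (w, w)"
      by (rule sum_single_nat[OF w]) (use w in \<open>simp add: proj_def D_def\<close>)
    also have "\<dots> = (if bit w i then cnj (U $$ (w, x)) else 0)"
      using w x' U' by (simp add: proj_def D_def index_mat_adjoint)
    finally show ?thesis .
  qed
  have "cj (proj N i) U $$ (x, x) = (\<Sum>w<D. (mat_adjoint U * proj N i) $$ (x, w) * U $$ (w, x))"
    unfolding cj_def by (rule mult_entry2[OF aUP U' x' x'])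
  also have "\<dots> = (\<Sum>w<D. if bit w i then complex_of_real ((cmod (U $$ (w, x)))\<^sup>2) else 0)"
  proof (rule sum.cong[OF refl])
    fix w assume "w \<in> {..<D}"
    then have w: "w < D" by simp
    show "(mat_adjoint U * proj N i) $$ (x, w) * U $$ (w, x) = (if bit w i then complex_of_real ((cmod (U $$ (w, x)))\<^sup>2) else 0)"
    proof (cases "bit w i")
      case True
      then have "(mat_adjoint U * proj N i) $$ (x, w) * U $$ (w, x) = cnj (U $$ (w, x)) * U $$ (w, x)"
        using e1[OF w] by simp
      also have "\<dots> = complex_of_real ((cmod (U $$ (w, x)))\<^sup>2)" by (rule cnj_mult_self)
      finally show ?thesis using True by simp
    next
      case False
      then show ?thesis using e1[OF w] by simp
    qed
  qed
  also have "\<dots> = (\<Sum>w\<in>{w \<in> {..<D}. bit w i}. complex_of_real ((cmod (U $$ (w, x)))\<^sup>2))"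
    by (simp only: sum.inter_filter[OF finite_lessThan])
  also have "\<dots> = complex_of_real (\<Sum>w\<in>{w \<in> {..<D}. bit w i}. (cmod (U $$ (w, x)))\<^sup>2)"
    by (simp only: of_real_sum)
  also have "(\<Sum>w\<in>{w \<in> {..<D}. bit w i}. (cmod (U $$ (w, x)))\<^sup>2) = p1 N i (U *\<^sub>v unit_vec (2 ^ N) x)"
    unfolding p1_def D_def[symmetric] by (intro sum.cong) (auto simp: mat_vec_unit[OF U' x'])
  finally show ?thesis .
qed


lemma p1_bound:
  fixes \<psi> :: "complex vec"
  assumes psi: "\<psi> \<in> carrier_vec D" and n1: "vnorm \<psi> = 1" and y: "y < D"
    and close: "vnorm (\<psi> - unit_vec D y) < eps" and e: "eps\<^sup>2 < 1 / 2"
    and D: "D = 2 ^ N"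
  shows "(bit y i \<longrightarrow> p1 N i \<psi> > 1 / 2) \<and> (\<not> bit y i \<longrightarrow> p1 N i \<psi> < 1 / 2)"
proof -
  define a where "a = cmod (\<psi> $ y)"
  define rest where "rest = (\<Sum>z\<in>{..<D} - {y}. (cmod (\<psi> $ z))\<^sup>2)"
  have tot: "(\<Sum>z<D. (cmod (\<psi> $ z))\<^sup>2) = 1" using vnorm_sq[of \<psi>] n1 psi by simp
  have split1: "(\<Sum>z<D. (cmod (\<psi> $ z))\<^sup>2) = a\<^sup>2 + rest"
    unfolding a_def rest_def using y by (simp add: sum.remove[of "{..<D}" y])
  have ra: "rest = 1 - a\<^sup>2" using tot split1 by simp
  have rest0: "rest \<ge> 0" unfolding rest_def by (simp add: sum_nonneg)
  have a1: "a \<le> 1"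
  proof -
    have "a\<^sup>2 \<le> 1\<^sup>2" using ra rest0 by simp
    then show ?thesis by (rule power2_le_imp_le) simp
  qed
  have a0: "a \<ge> 0" unfolding a_def by simp
  have dv: "dim_vec \<psi> = D" using psi by simp
  have "(vnorm (\<psi> - unit_vec D y))\<^sup>2 = (\<Sum>z<D. (cmod ((\<psi> - unit_vec D y) $ z))\<^sup>2)"
    by (simp add: vnorm_sq)
  also have "\<dots> = (cmod ((\<psi> - unit_vec D y) $ y))\<^sup>2 + (\<Sum>z\<in>{..<D} - {y}. (cmod ((\<psi> - unit_vec D y) $ z))\<^sup>2)"
    using y by (simp add: sum.remove[of "{..<D}" y])
  also have "(\<Sum>z\<in>{..<D} - {y}. (cmod ((\<psi> - unit_vec D y) $ z))\<^sup>2) = rest"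
    unfolding rest_def using y dv by (intro sum.cong refl) auto
  also have "(\<psi> - unit_vec D y) $ y = \<psi> $ y - 1" using y dv by simp
  finally have vn: "(vnorm (\<psi> - unit_vec D y))\<^sup>2 = (cmod (\<psi> $ y - 1))\<^sup>2 + rest" .
  have "1 - a \<le> cmod (\<psi> $ y - 1)"
  proof -
    have "cmod (1::complex) - cmod (\<psi> $ y) \<le> cmod (1 - \<psi> $ y)" by (rule norm_triangle_ineq2)
    then show ?thesis unfolding a_def by (simp add: norm_minus_commute)
  qed
  then have "(1 - a)\<^sup>2 \<le> (cmod (\<psi> $ y - 1))\<^sup>2" using a1 by (intro power_mono) auto
  moreover have "(vnorm (\<psi> - unit_vec D y))\<^sup>2 < eps\<^sup>2"
    using close vnorm_nonneg[of "\<psi> - unit_vec D y"] by (intro power_strict_mono) auto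
  ultimately have "(1 - a)\<^sup>2 + (1 - a\<^sup>2) < 1 / 2" using vn ra e by linarith
  then have "2 - 2 * a < 1 / 2" by (simp add: power2_eq_square algebra_simps)
  then have a34: "a > 3 / 4" by simp
  then have asq: "a\<^sup>2 > 9 / 16"
  proof -
    have "(3 / 4 :: real)\<^sup>2 < a\<^sup>2" using a34 by (intro power_strict_mono) auto
    then show ?thesis by (simp add: power2_eq_square)
  qed
  have fin: "finite {z::nat. z < 2 ^ N \<and> bit z i}" by simp
  show ?thesis
  proof (intro conjI impI)
    assume b: "bit y i"
    have "a\<^sup>2 \<le> p1 N i \<psi>" unfolding p1_def a_def
      by (rule member_le_sum[where f = "\<lambda>z. (cmod (\<psi> $ z))\<^sup>2", OF _ _ fin]) (use b y D in auto)
    then show "p1 N i \<psi> > 1 / 2" using asq by linarith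
  next
    assume b: "\<not> bit y i"
    have "p1 N i \<psi> \<le> rest" unfolding p1_def rest_def
      by (rule sum_mono2) (use b D in auto)
    then show "p1 N i \<psi> < 1 / 2" using ra asq by linarith
  qed
qed

lemma gates_norm:
  assumes "\<forall>g\<in>set gs. gate_on N (fst g) (snd g)" "w \<in> carrier_vec (2 ^ N)"
  shows "vnorm (prodl (2 ^ N) (map snd gs) *\<^sub>v w) = vnorm w"
  using assms
proof (induction gs arbitrary: w)
  case Nil
  then show ?case by simp
next
  case (Cons g gs)
  have gt: "gate_on N (fst g) (snd g)" using Cons.prems by simp
  have Gc: "snd g \<in> carrier_mat (2 ^ N) (2 ^ N)" by (rule gate_carrier[OF gt])
  have Pc: "prodl (2 ^ N) (map snd gs) \<in> carrier_mat (2 ^ N) (2 ^ N)"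
    using Cons.prems gate_carrier by (intro prodl_carrier) auto
  have "prodl (2 ^ N) (map snd (g # gs)) *\<^sub>v w = snd g *\<^sub>v (prodl (2 ^ N) (map snd gs) *\<^sub>v w)"
    using Gc Pc Cons.prems(2) by simp
  also have "vnorm \<dots> = vnorm (prodl (2 ^ N) (map snd gs) *\<^sub>v w)"
    using Pc Cons.prems(2) by (intro unitary_norm[OF gate_unitary[OF gt]]) auto
  also have "\<dots> = vnorm w" using Cons by simp
  finally show ?case .
qed

lemma circ_norm:
  assumes c: "is_circuit N C" and w: "w \<in> carrier_vec (2 ^ N)"
  shows "vnorm (circuit_op N C *\<^sub>v w) = vnorm w"
  unfolding circ_prodl[OF c] using gl_gate[OF c] w by (intro gates_norm) auto

lemma row_support:
  assumes ap: "approximates n m eps C M" and M: "M \<in> carrier_mat n n" and e: "eps < sqrt 2 / 2"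
    and i: "i < n" and j: "j < n" and Mij: "M $$ (i, j) = 1"
  shows "j \<in> LC C {i}"
proof (rule ccontr)
  assume nj: "j \<notin> LC C {i}"
  define N where "N = n + m"
  have c: "is_circuit N C" using ap unfolding approximates_def N_def by auto
  define U where "U = circuit_op N C"
  have Uc: "U \<in> carrier_mat (2 ^ N) (2 ^ N)" unfolding U_def by (rule circ_carrier[OF c])
  define K where "K = cj (proj N i) U"
  have K: "loc N (LC C {i}) K" unfolding K_def U_def by (rule circ_cj[OF c proj_loc])
  define v0 :: "bit vec" where "v0 = 0\<^sub>v n"
  define v1 :: "bit vec" where "v1 = unit_vec n j"
  have v0: "v0 \<in> carrier_vec n" and v1: "v1 \<in> carrier_vec n" unfolding v0_def v1_def by auto
  define x0 where "x0 = bidx v0"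
  define x1 where "x1 = bidx v1"
  have nN: "(2::nat) ^ n \<le> 2 ^ N" unfolding N_def by (simp add: power_increasing)
  have x0N: "x0 < 2 ^ N" unfolding x0_def using less_le_trans[OF bidx_less nN] v0 by auto
  have x1N: "x1 < 2 ^ N" unfolding x1_def using less_le_trans[OF bidx_less nN] v1 by auto
  have bx0: "\<not> bit x0 k" for k unfolding x0_def using bit_bidx[of v0 n k] v0 by (auto simp: v0_def)
  have bx1: "bit x1 k \<longleftrightarrow> k < n \<and> k = j" for k unfolding x1_def using bit_bidx[of v1 n k] v1 j by (auto simp: v1_def split: if_splits)
  have "K $$ (x0, x0) = K $$ (x1, x1)"
  proof (rule locD(3)[OF K x0N x0N x1N x1N])
    show "agree N (LC C {i}) x0 x0" "agree N (LC C {i}) x1 x1" unfolding agree_def by auto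
    fix k assume "k \<in> LC C {i}"
    then have "k \<noteq> j" using nj by auto
    then show "bit x0 k = bit x1 k" "bit x0 k = bit x1 k" using bx0 bx1 by auto
  qed
  then have peq: "p1 N i (U *\<^sub>v unit_vec (2 ^ N) x0) = p1 N i (U *\<^sub>v unit_vec (2 ^ N) x1)"
    unfolding K_def p1_cj[OF Uc x0N] p1_cj[OF Uc x1N] by simp
  have eps0: "0 < eps"
    using approx_vec[OF ap M v0] vnorm_nonneg by (meson le_less_trans)
  have e2: "eps\<^sup>2 < 1 / 2"
  proof -
    have "eps\<^sup>2 < (sqrt 2 / 2)\<^sup>2" using eps0 e by (intro power_strict_mono) auto
    also have "(sqrt 2 / 2)\<^sup>2 = (1 / 2 :: real)" by (simp add: power_divide)
    finally show ?thesis .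
  qed
  have Mv0: "M *\<^sub>v v0 = 0\<^sub>v n" unfolding v0_def using M by (intro eq_vecI) (auto simp: scalar_prod_def)
  have Mv1: "(M *\<^sub>v v1) $ i = 1" unfolding v1_def using M i j Mij by simp
  define y0 where "y0 = bidx (M *\<^sub>v v0)"
  define y1 where "y1 = bidx (M *\<^sub>v v1)"
  have dM: "dim_vec (M *\<^sub>v v0) = n" "dim_vec (M *\<^sub>v v1) = n" using M by auto
  have by0: "\<not> bit y0 i" unfolding y0_def using bit_bidx[OF dM(1), of i] Mv0 by simp
  have by1: "bit y1 i" unfolding y1_def using bit_bidx[OF dM(2), of i] Mv1 i by simp
  have y0N: "y0 < 2 ^ N" unfolding y0_def using less_le_trans[OF bidx_less[OF dM(1)] nN] .
  have y1N: "y1 < 2 ^ N" unfolding y1_def using less_le_trans[OF bidx_less[OF dM(2)] nN] .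
  have ps0: "U *\<^sub>v unit_vec (2 ^ N) x0 \<in> carrier_vec (2 ^ N)" using Uc by simp
  have ps1: "U *\<^sub>v unit_vec (2 ^ N) x1 \<in> carrier_vec (2 ^ N)" using Uc by simp
  have n0: "vnorm (U *\<^sub>v unit_vec (2 ^ N) x0) = 1" unfolding U_def using circ_norm[OF c] vnorm_unit[OF x0N] by simp
  have n1: "vnorm (U *\<^sub>v unit_vec (2 ^ N) x1) = 1" unfolding U_def using circ_norm[OF c] vnorm_unit[OF x1N] by simp
  have c0: "vnorm (U *\<^sub>v unit_vec (2 ^ N) x0 - unit_vec (2 ^ N) y0) < eps"
    using approx_vec[OF ap M v0] unfolding U_def N_def x0_def y0_def .
  have c1: "vnorm (U *\<^sub>v unit_vec (2 ^ N) x1 - unit_vec (2 ^ N) y1) < eps"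
    using approx_vec[OF ap M v1] unfolding U_def N_def x1_def y1_def .
  have "p1 N i (U *\<^sub>v unit_vec (2 ^ N) x0) < 1 / 2"
    using p1_bound[OF ps0 n0 y0N c0 e2 refl] by0 by blast
  moreover have "p1 N i (U *\<^sub>v unit_vec (2 ^ N) x1) > 1 / 2"
    using p1_bound[OF ps1 n1 y1N c1 e2 refl] by1 by blast
  ultimately show False using peq by simp
qed

lemma row_weight:
  assumes ap: "approximates n m eps C M" and M: "M \<in> carrier_mat n n" and e: "eps < sqrt 2 / 2" and i: "i < n"
  shows "card {j. j < n \<and> M $$ (i, j) = 1} \<le> 3 ^ length C"
proof -
  have c: "is_circuit (n + m) C" using ap unfolding approximates_def by auto
  have L: "finite (LC C {i}) \<and> card (LC C {i}) \<le> 3 ^ length C * card {i}" by (rule LC_card[OF c]) simp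
  have "{j. j < n \<and> M $$ (i, j) = 1} \<subseteq> LC C {i}" using row_support[OF ap M e i] by auto
  then have "card {j. j < n \<and> M $$ (i, j) = 1} \<le> card (LC C {i})" using L by (intro card_mono) auto
  then show ?thesis using L by simp
qed


lemma det_invertible:
  fixes A :: "bit mat"
  assumes A: "A \<in> carrier_mat n n" and d: "det A \<noteq> 0"
  shows "invertible_mat A"
proof -
  have "A \<in> Units (ring_mat TYPE(bit) n undefined)" by (rule det_non_zero_imp_unit[OF A d])
  then obtain B where B: "B \<in> carrier_mat n n" "B * A = 1\<^sub>m n" "A * B = 1\<^sub>m n"
    unfolding Units_def ring_mat_def by auto
  show ?thesis unfolding invertible_mat_def inverts_mat_def square_mat.simps using A B by auto
qed

lemma bit_UNIV: "(UNIV :: bit set) = {0, 1}"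
  using bit_type_cases by auto

lemma card_bit_UNIV: "card (UNIV :: bit set) = 2"
  unfolding bit_UNIV by simp

lemma finite_bit_UNIV: "finite (UNIV :: bit set)"
  unfolding bit_UNIV by simp

lemma carrier_mat_bit_finite: "finite (carrier_mat n k :: bit mat set)"
proof -
  have "carrier_mat n k \<subseteq> (\<lambda>f. mat n k f) ` PiE ({..<n} \<times> {..<k}) (\<lambda>_. UNIV :: bit set)"
  proof
    fix A :: "bit mat" assume A: "A \<in> carrier_mat n k"
    have "A = mat n k (restrict (\<lambda>ij. A $$ ij) ({..<n} \<times> {..<k}))"
      using A by (intro eq_matI) auto
    moreover have "restrict (\<lambda>ij. A $$ ij) ({..<n} \<times> {..<k}) \<in> PiE ({..<n} \<times> {..<k}) (\<lambda>_. UNIV :: bit set)"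
      by simp
    ultimately show "A \<in> (\<lambda>f. mat n k f) ` PiE ({..<n} \<times> {..<k}) (\<lambda>_. UNIV :: bit set)" by blast
  qed
  moreover have "finite ((\<lambda>f. mat n k f) ` PiE ({..<n} \<times> {..<k}) (\<lambda>_. UNIV :: bit set))"
    using finite_bit_UNIV by (intro finite_imageI finite_PiE) auto
  ultimately show ?thesis by (rule finite_subset)
qed

definition blk :: "nat \<Rightarrow> (nat \<times> nat \<Rightarrow> bit) \<Rightarrow> bit mat" where
  "blk n f = mat n n (\<lambda>(i, j). if i = j then 1 else if i < n div 2 \<and> n div 2 \<le> j then f (i, j) else 0)"

lemma blk_GL: "blk n f \<in> GL2 n"
proof -
  have c: "blk n f \<in> carrier_mat n n" unfolding blk_def by simp
  have ut: "upper_triangular (blk n f)" unfolding upper_triangular_def blk_def by auto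
  have "det (blk n f) = prod_list (diag_mat (blk n f))" by (rule det_upper_triangular[OF ut c])
  also have "diag_mat (blk n f) = map (\<lambda>_. 1) [0..<n]" unfolding diag_mat_def blk_def by auto
  also have "prod_list (map (\<lambda>_. 1::bit) [0..<n]) = 1" by (induction n) auto
  finally have "det (blk n f) \<noteq> 0" by simp
  then show ?thesis unfolding GL2_def using c det_invertible[OF c] by simp
qed

lemma GL_card_lower: "2 ^ ((n div 2) * (n - n div 2)) \<le> card (GL2 n)"
proof -
  define I where "I = {..<n div 2} \<times> {n div 2..<n}"
  define F where "F = PiE I (\<lambda>_. UNIV :: bit set)"
  have fI: "finite I" unfolding I_def by simp
  have inj: "inj_on (blk n) F"
  proof (rule inj_onI)
    fix f g assume f: "f \<in> F" and g: "g \<in> F" and e: "blk n f = blk n g"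
    show "f = g"
    proof (rule PiE_ext[OF f[unfolded F_def] g[unfolded F_def]])
      fix p assume p: "p \<in> I"
      obtain i j where ij: "p = (i, j)" by force
      have i: "i < n div 2" "n div 2 \<le> j" "j < n" using p unfolding I_def ij by auto
      then have "i < n" "i \<noteq> j" by auto
      then have "blk n f $$ (i, j) = f (i, j)" "blk n g $$ (i, j) = g (i, j)" using i unfolding blk_def by auto
      then show "f p = g p" using e ij by simp
    qed
  qed
  have "card F = 2 ^ card I" unfolding F_def using fI by (simp add: card_PiE card_bit_UNIV)
  also have "card I = (n div 2) * (n - n div 2)" unfolding I_def by (simp add: card_cartesian_product)
  finally have cF: "card F = 2 ^ ((n div 2) * (n - n div 2))" .
  have fin: "finite (GL2 n)"
  proof -
    have "GL2 n \<subseteq> carrier_mat n n" unfolding GL2_def by auto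
    moreover have "finite (carrier_mat n n :: bit mat set)" by (rule carrier_mat_bit_finite)
    ultimately show ?thesis by (rule finite_subset)
  qed
  have "card F \<le> card (GL2 n)" using inj blk_GL fin by (intro card_inj_on_le) auto
  then show ?thesis using cF by simp
qed


lemma small_sets_card:
  "card {S. S \<subseteq> {..<n} \<and> card S \<le> w} \<le> (n + 1) ^ w"
proof -
  let ?R = "{S. S \<subseteq> {..<n} \<and> card S \<le> w}"
  let ?Ls = "{xs. length xs \<le> w \<and> set xs \<subseteq> {..<n}}"
  have L: "finite ?Ls \<and> card ?Ls \<le> (card {..<n} + 1) ^ w" by (rule card_lists_le) simp
  have sub: "?R \<subseteq> set ` ?Ls"
  proof
    fix S assume S: "S \<in> ?R"
    then have fS: "finite S" using finite_subset by blast
    have "set (sorted_list_of_set S) = S" "length (sorted_list_of_set S) = card S" using fS by auto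
    then show "S \<in> set ` ?Ls" using S by (intro image_eqI[where x="sorted_list_of_set S"]) auto
  qed
  have "card ?R \<le> card (set ` ?Ls)" using L by (intro card_mono[OF _ sub]) auto
  also have "\<dots> \<le> card ?Ls" using L by (intro card_image_le) auto
  also have "\<dots> \<le> (n + 1) ^ w" using L by simp
  finally show ?thesis .
qed

lemma rowcount:
  "card {M :: bit mat. M \<in> carrier_mat n n \<and> (\<forall>i<n. card {j. j < n \<and> M $$ (i, j) = 1} \<le> w)} \<le> (n + 1) ^ (w * n)"
proof -
  let ?B = "{M :: bit mat. M \<in> carrier_mat n n \<and> (\<forall>i<n. card {j. j < n \<and> M $$ (i, j) = 1} \<le> w)}"
  let ?R = "{S. S \<subseteq> {..<n} \<and> card S \<le> w}"
  define g where "g M = restrict (\<lambda>i. {j. j < n \<and> M $$ (i, j) = 1}) {..<n}" for M :: "bit mat"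
  have fR: "finite ?R" by (rule finite_subset[of _ "Pow {..<n}"]) auto
  have inj: "inj_on g ?B"
  proof (rule inj_onI)
    fix M M' assume M: "M \<in> ?B" and M': "M' \<in> ?B" and e: "g M = g M'"
    show "M = M'"
    proof (rule eq_matI)
      fix i j assume "i < dim_row M'" "j < dim_col M'"
      then have i: "i < n" and j: "j < n" using M' by auto
      have "{j. j < n \<and> M $$ (i, j) = 1} = {j. j < n \<and> M' $$ (i, j) = 1}"
        using fun_cong[OF e, of i] i unfolding g_def by simp
      then have "M $$ (i, j) = 1 \<longleftrightarrow> M' $$ (i, j) = 1" using j by blast
      then show "M $$ (i, j) = M' $$ (i, j)" using bit_type_cases[of "M $$ (i, j)"] bit_type_cases[of "M' $$ (i, j)"] by auto
    qed (use M M' in auto)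
  qed
  have im: "g ` ?B \<subseteq> PiE {..<n} (\<lambda>_. ?R)" unfolding g_def by auto
  have "card ?B \<le> card (PiE {..<n} (\<lambda>_. ?R))"
    by (rule card_inj_on_le[OF inj im]) (use fR in \<open>simp add: finite_PiE\<close>)
  also have "\<dots> = card ?R ^ n" by (simp add: card_PiE)
  also have "\<dots> \<le> ((n + 1) ^ w) ^ n" by (rule power_mono[OF small_sets_card]) simp
  also have "\<dots> = (n + 1) ^ (w * n)" by (simp add: power_mult)
  finally show ?thesis .
qed


lemma pow_exp_bound: "0 \<le> x \<Longrightarrow> (1 + x) ^ s \<le> exp (real s * x)"
proof -
  assume x: "0 \<le> x"
  have "(1 + x) ^ s \<le> exp x ^ s" by (rule power_mono) (use x in auto)
  also have "\<dots> = exp (real s * x)" by (simp add: exp_of_nat_mult)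
  finally show ?thesis .
qed

lemma err_cond:
  fixes t :: real
  assumes t0: "0 < t" and t1: "t \<le> 1" and n: "n \<ge> 1" and s: "s \<le> n ^ 2"
  shows "real s * (8 * (t / (8 * real n ^ 2))) * (1 + 8 * (t / (8 * real n ^ 2))) ^ s \<le> 3 * t"
proof -
  define x where "x = t / real n ^ 2"
  have e: "8 * (t / (8 * real n ^ 2)) = x" unfolding x_def by simp
  have n2: "real n ^ 2 > 0" using n by simp
  have x0: "0 \<le> x" unfolding x_def using t0 by simp
  have sr: "real s \<le> real n ^ 2" using s by (metis of_nat_le_iff of_nat_power)
  have sx: "real s * x \<le> t"
  proof -
    have "real s * x \<le> real n ^ 2 * x" using sr x0 by (rule mult_right_mono)
    also have "\<dots> = t" unfolding x_def using n2 by simp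
    finally show ?thesis .
  qed
  have "(1 + x) ^ s \<le> exp (real s * x)" by (rule pow_exp_bound[OF x0])
  also have "\<dots> \<le> exp 1" using sx t1 by simp
  also have "\<dots> \<le> 3" by (rule exp_le)
  finally have p: "(1 + x) ^ s \<le> 3" .
  have "real s * x * (1 + x) ^ s \<le> t * 3"
    using sx p by (intro mult_mono) (use x0 t0 in auto)
  then show ?thesis unfolding e by simp
qed

lemma pow_plus_one_le: "(a::nat) \<ge> 1 \<Longrightarrow> N \<ge> 1 \<Longrightarrow> a ^ N + 1 \<le> (2 * a) ^ N"
proof -
  assume a: "a \<ge> 1" and N: "N \<ge> 1"
  have "a ^ N + 1 \<le> 2 * a ^ N" using a by simp
  also have "\<dots> \<le> 2 ^ N * a ^ N" using N by (intro mult_right_mono) (simp_all add: self_le_power)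
  also have "\<dots> = (2 * a) ^ N" by (simp add: power_mult_distrib)
  finally show ?thesis .
qed


lemma pow_aux: "((a * b ^ 2) ^ 2) ^ 16 = a ^ 32 * (b::real) ^ 64"
proof -
  have "((a * b ^ 2) ^ 2) ^ 16 = (a * b ^ 2) ^ 32" by (simp only: power_mult[symmetric]) simp
  also have "\<dots> = a ^ 32 * (b ^ 2) ^ 32" by (rule power_mult_distrib)
  also have "(b ^ 2) ^ 32 = b ^ 64" by (simp only: power_mult[symmetric]) simp
  finally show ?thesis .
qed

lemma B2_bound:
  fixes eps t :: real and n m D :: nat
  assumes t0: "0 < t" and t1: "t \<le> 1" and es: "2 * eps + 2 * (3 * t) \<le> sqrt 2"
    and n: "n \<ge> 2" and ND: "(n + m) * D \<le> n ^ 2"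
  shows "real (card {M \<in> GL2 n. \<exists>C. approximates n m eps C M \<and> length C \<le> D})
     \<le> (4 * (21 / t) ^ 32 * real (n + m) ^ 66) ^ ((n + m) * D)"
proof -
  define N where "N = n + m"
  define \<delta> where "\<delta> = t / (8 * real n ^ 2)"
  define k where "k = \<lceil>1 / \<delta>\<rceil> + 1"
  have n2: "real n ^ 2 \<ge> 4" using n by (metis of_nat_numeral of_nat_le_iff of_nat_power power2_nat_le_eq_le power2_eq_square numeral_Bit0_eq_double mult_2 add_2_eq_Suc numeral_2_eq_2 le_refl) 
  have d: "\<delta> > 0" unfolding \<delta>_def using t0 n by (intro divide_pos_pos) auto
  have k: "real_of_int k \<ge> 1 / \<delta> + 1" unfolding k_def by linarith
  have k0: "0 \<le> k"
  proof -
    have "0 < 1 / \<delta>" using d by simp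
    then have "real_of_int k > 0" using k by linarith
    then show ?thesis by simp
  qed
  have b: "real s * (8 * \<delta>) * (1 + 8 * \<delta>) ^ s \<le> 3 * t" if "s \<le> (n + m) * D" for s
    unfolding \<delta>_def by (rule err_cond[OF t0 t1]) (use n that ND in auto)
  have c1: "card {M \<in> GL2 n. \<exists>C. approximates n m eps C M \<and> length C \<le> D}
     \<le> ((card (RG (n + m) \<delta> k) + 1) ^ (n + m) + 1) ^ D"
    by (rule B2_card[OF d k b es])
  define R where "R = card (RG N \<delta> k)"
  define g where "g = nat (2 * k + 1) ^ 2"
  have g1: "g \<ge> 1" unfolding g_def using k0 by simp
  have N1: "N \<ge> 1" unfolding N_def using n by simp
  have R: "R \<le> N * N * g ^ 16" unfolding R_def g_def
    using RG_card[of N \<delta> k] grid_card[of \<delta> k] by (meson le_trans mult_le_mono2 power_mono zero_le)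
  have "(R + 1) ^ N + 1 \<le> (2 * (R + 1)) ^ N" by (rule pow_plus_one_le) (use N1 in auto)
  then have "((R + 1) ^ N + 1) ^ D \<le> ((2 * (R + 1)) ^ N) ^ D" by (rule power_mono) simp
  also have "\<dots> = (2 * (R + 1)) ^ (N * D)" by (simp add: power_mult)
  also have "\<dots> \<le> (4 * (N * N * g ^ 16)) ^ (N * D)"
  proof (rule power_mono)
    have "1 \<le> N * N * g ^ 16" using N1 g1 by simp
    moreover have "\<And>X::nat. R \<le> X \<Longrightarrow> 1 \<le> X \<Longrightarrow> 2 * (R + 1) \<le> 4 * X" by presburger
    ultimately show "2 * (R + 1) \<le> 4 * (N * N * g ^ 16)" using R by blast
  qed simp
  finally have c2: "card {M \<in> GL2 n. \<exists>C. approximates n m eps C M \<and> length C \<le> D} \<le> (4 * (N * N * g ^ 16)) ^ (N * D)"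
    using c1 unfolding R_def N_def by linarith
  have kb: "real_of_int (2 * k + 1) \<le> 21 / t * real n ^ 2"
  proof -
    have "real_of_int \<lceil>1 / \<delta>\<rceil> < 1 / \<delta> + 1" by linarith
    moreover have "1 / \<delta> = 8 * real n ^ 2 / t" unfolding \<delta>_def by simp
    ultimately have "real_of_int (2 * k + 1) \<le> 16 * real n ^ 2 / t + 5" unfolding k_def by simp
    moreover have "5 \<le> 5 * real n ^ 2 / t"
    proof -
      have "t \<le> real n ^ 2" using t1 n2 by linarith
      then show ?thesis using t0 by (simp add: le_divide_eq)
    qed
    ultimately show ?thesis by (simp add: field_simps)
  qed
  have gb: "real g \<le> (21 / t * real n ^ 2) ^ 2"
  proof -
    have "real g = real_of_int (2 * k + 1) ^ 2" unfolding g_def using k0 by simp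
    also have "\<dots> \<le> (21 / t * real n ^ 2) ^ 2" using kb k0 by (intro power_mono) auto
    finally show ?thesis .
  qed
  have "real (4 * (N * N * g ^ 16)) = 4 * real N ^ 2 * real g ^ 16" by (simp add: power2_eq_square)
  also have "\<dots> \<le> 4 * real N ^ 2 * ((21 / t * real n ^ 2) ^ 2) ^ 16"
    by (intro mult_left_mono power_mono gb) auto
  also have "\<dots> = 4 * (21 / t) ^ 32 * (real N ^ 2 * real n ^ 64)"
    unfolding pow_aux by (simp only: mult_ac)
  also have "\<dots> \<le> 4 * (21 / t) ^ 32 * (real N ^ 2 * real N ^ 64)"
    using t0 unfolding N_def by (intro mult_left_mono power_mono) auto
  also have "\<dots> = 4 * (21 / t) ^ 32 * real N ^ 66" by (simp add: power_add[symmetric])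
  finally have "real (4 * (N * N * g ^ 16)) \<le> 4 * (21 / t) ^ 32 * real N ^ 66" .
  then have "real ((4 * (N * N * g ^ 16)) ^ (N * D)) \<le> (4 * (21 / t) ^ 32 * real N ^ 66) ^ (N * D)"
    unfolding of_nat_power by (intro power_mono) auto
  then show ?thesis using c2 unfolding N_def by (meson of_nat_le_iff order_trans)
qed


lemma GL_lower_real: "real (card (GL2 n)) \<ge> 2 powr ((real n ^ 2 - 1) / 4)"
proof -
  define a where "a = n div 2"
  have ex: "real (a * (n - a)) \<ge> (real n ^ 2 - 1) / 4"
  proof (cases "even n")
    case True
    then have "n = 2 * a" unfolding a_def by simp
    then show ?thesis by (simp add: power2_eq_square algebra_simps)
  next
    case False
    then have "n = 2 * a + 1" unfolding a_def by presburger
    then show ?thesis by (simp add: power2_eq_square algebra_simps)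
  qed
  have "2 powr ((real n ^ 2 - 1) / 4) \<le> 2 powr real (a * (n - a))" using ex by simp
  also have "\<dots> = (2::real) ^ (a * (n - a))" by (rule powr_realpow) simp
  also have "\<dots> = real (2 ^ (a * (n - a)))" by simp
  also have "\<dots> \<le> real (card (GL2 n))" unfolding a_def using GL_card_lower by (simp only: of_nat_le_iff)
  finally show ?thesis .
qed

lemma three_pow_le_sqrt:
  fixes c :: real
  assumes c: "c \<le> 1 / 4" and n: "n \<ge> 1" and L: "real L < c * log 2 (real n)"
  shows "(3::real) ^ L \<le> sqrt (real n)"
proof -
  have ln: "log 2 (real n) \<ge> 0" using n by simp
  have "(3::real) ^ L \<le> 4 ^ L" by (rule power_mono) auto
  also have "(4::real) ^ L = 2 powr (2 * real L)"
  proof -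
    have "(4::real) ^ L = 2 ^ (2 * L)" by (simp add: power_mult)
    also have "\<dots> = 2 powr real (2 * L)" by (rule powr_realpow[symmetric]) simp
    finally show ?thesis by simp
  qed
  also have "\<dots> \<le> 2 powr (log 2 (real n) / 2)"
  proof -
    have "c * log 2 (real n) \<le> 1 / 4 * log 2 (real n)" using c ln by (rule mult_right_mono)
    then have "2 * real L \<le> log 2 (real n) / 2" using L by linarith
    then show ?thesis by simp
  qed
  also have "\<dots> = (2 powr log 2 (real n)) powr (1 / 2)" by (simp add: powr_powr)
  also have "\<dots> = sqrt (real n)" using n by (simp add: powr_half_sqrt)
  finally show ?thesis .
qed

lemma B1_bound:
  fixes eps c :: real
  assumes e: "eps < sqrt 2 / 2" and c: "c \<le> 1 / 4" and n: "n \<ge> 1"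
  shows "real (card {M \<in> GL2 n. \<exists>C. approximates n m eps C M \<and> real (length C) < c * log 2 (real n)})
    \<le> (real n + 1) powr (sqrt (real n) * real n)"
proof -
  define w where "w = nat \<lfloor>sqrt (real n)\<rfloor>"
  have sub: "{M \<in> GL2 n. \<exists>C. approximates n m eps C M \<and> real (length C) < c * log 2 (real n)}
     \<subseteq> {M :: bit mat. M \<in> carrier_mat n n \<and> (\<forall>i<n. card {j. j < n \<and> M $$ (i, j) = 1} \<le> w)}"
  proof
    fix M assume "M \<in> {M \<in> GL2 n. \<exists>C. approximates n m eps C M \<and> real (length C) < c * log 2 (real n)}"
    then obtain C where M: "M \<in> GL2 n" and ap: "approximates n m eps C M" and L: "real (length C) < c * log 2 (real n)"
      by blast
    have Mc: "M \<in> carrier_mat n n" using M unfolding GL2_def by simp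
    have "card {j. j < n \<and> M $$ (i, j) = 1} \<le> w" if i: "i < n" for i
    proof -
      have "real (card {j. j < n \<and> M $$ (i, j) = 1}) \<le> real (3 ^ length C)"
        using row_weight[OF ap Mc e i] by (simp only: of_nat_le_iff)
      also have "\<dots> \<le> sqrt (real n)" using three_pow_le_sqrt[OF c n L] by simp
      finally have "real (card {j. j < n \<and> M $$ (i, j) = 1}) \<le> sqrt (real n)" .
      then show ?thesis unfolding w_def by (simp add: le_nat_floor)
    qed
    then show "M \<in> {M :: bit mat. M \<in> carrier_mat n n \<and> (\<forall>i<n. card {j. j < n \<and> M $$ (i, j) = 1} \<le> w)}"
      using Mc by simp
  qed
  have fin: "finite {M :: bit mat. M \<in> carrier_mat n n \<and> (\<forall>i<n. card {j. j < n \<and> M $$ (i, j) = 1} \<le> w)}"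
    by (rule finite_subset[OF _ carrier_mat_bit_finite[of n n]]) auto
  have "card {M \<in> GL2 n. \<exists>C. approximates n m eps C M \<and> real (length C) < c * log 2 (real n)} \<le> (n + 1) ^ (w * n)"
    using card_mono[OF fin sub] rowcount[of n w] by linarith
  then have "real (card {M \<in> GL2 n. \<exists>C. approximates n m eps C M \<and> real (length C) < c * log 2 (real n)})
     \<le> real ((n + 1) ^ (w * n))" by (simp only: of_nat_le_iff)
  also have "\<dots> = (real n + 1) ^ (w * n)" by (simp add: add.commute)
  also have "\<dots> = (real n + 1) powr real (w * n)" by (rule powr_realpow[symmetric]) simp
  also have "\<dots> \<le> (real n + 1) powr (sqrt (real n) * real n)"
  proof (rule powr_mono)
    have "real w \<le> sqrt (real n)" unfolding w_def by simp
    then show "real (w * n) \<le> sqrt (real n) * real n" by (simp add: mult_right_mono)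
  qed simp
  finally show ?thesis .
qed


lemma B2_bound2:
  fixes eps t c K1 :: real and n m :: nat
  assumes t0: "0 < t" and t1: "t \<le> 1" and es: "2 * eps + 2 * (3 * t) \<le> sqrt 2"
    and K1: "K1 = log 2 (4 * (21 / t) ^ 32)" and c0: "0 < c" and c4: "c \<le> 1 / 4"
    and cK: "c * (K1 + 66) \<le> 1 / 8" and n: "n \<ge> 2"
  shows "real (card {M \<in> GL2 n. \<exists>C. approximates n m eps C M \<and>
      real (length C) < c * (real n ^ 2 / (real (n + m) * log 2 (real (n + m))))}) \<le> 2 powr (real n ^ 2 / 8)"
proof -
  define N where "N = n + m"
  define lN where "lN = log 2 (real N)"
  have N2: "N \<ge> 2" unfolding N_def using n by simp
  have lN1: "lN \<ge> 1" unfolding lN_def using N2 by simp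
  define x where "x = c * (real n ^ 2 / (real N * lN))"
  have x0: "x \<ge> 0" unfolding x_def using c0 lN1 by simp
  define D where "D = nat \<lfloor>x\<rfloor>"
  have Dx: "real D \<le> x" unfolding D_def using x0 by simp
  have sub: "{M \<in> GL2 n. \<exists>C. approximates n m eps C M \<and>
      real (length C) < c * (real n ^ 2 / (real (n + m) * log 2 (real (n + m))))}
    \<subseteq> {M \<in> GL2 n. \<exists>C. approximates n m eps C M \<and> length C \<le> D}"
  proof
    fix M assume "M \<in> {M \<in> GL2 n. \<exists>C. approximates n m eps C M \<and>
      real (length C) < c * (real n ^ 2 / (real (n + m) * log 2 (real (n + m))))}"
    then obtain C where M: "M \<in> GL2 n" "approximates n m eps C M" and L: "real (length C) < x"
      unfolding x_def N_def lN_def by blast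
    have "length C \<le> D" unfolding D_def using L by (simp add: le_nat_floor)
    then show "M \<in> {M \<in> GL2 n. \<exists>C. approximates n m eps C M \<and> length C \<le> D}" using M by blast
  qed
  have NDx: "real (N * D) \<le> c * real n ^ 2 / lN"
  proof -
    have "real (N * D) \<le> real N * x" using Dx by (simp add: mult_left_mono)
    also have "\<dots> = c * real n ^ 2 / lN" unfolding x_def using N2 by simp
    finally show ?thesis .
  qed
  have ND: "N * D \<le> n ^ 2"
  proof -
    have p: "0 \<le> c * real n ^ 2" using c0 by simp
    have "c * real n ^ 2 / lN \<le> c * real n ^ 2 / 1" by (rule divide_left_mono) (use lN1 p in auto)
    then have "c * real n ^ 2 / lN \<le> c * real n ^ 2" by simp
    also have "\<dots> \<le> 1 * real n ^ 2" using c4 by (intro mult_right_mono) auto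
    also have "\<dots> = real n ^ 2" by simp
    finally have "real (N * D) \<le> real (n ^ 2)" using NDx by simp
    then show ?thesis by (simp only: of_nat_le_iff)
  qed
  define Z where "Z = 4 * (21 / t) ^ 32 * real N ^ 66"
  have Z1: "Z \<ge> 1"
  proof -
    have "(1::real) \<le> 21 / t" using t0 t1 by (simp add: le_divide_eq)
    then have "1 \<le> (21 / t) ^ 32" by (simp add: one_le_power)
    moreover have "1 \<le> real N ^ 66" using N2 by (simp add: one_le_power)
    ultimately have "1 \<le> (21 / t) ^ 32 * real N ^ 66" by (metis mult_mono' mult.right_neutral zero_le_one order_trans)
    then show ?thesis unfolding Z_def by linarith
  qed
  have K10: "K1 \<ge> 0"
  proof -
    have "(1::real) \<le> 21 / t" using t0 t1 by (simp add: le_divide_eq)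
    then have "1 \<le> (21 / t) ^ 32" by (simp add: one_le_power)
    then have "1 \<le> 4 * (21 / t) ^ 32" by linarith
    moreover have "0 < 4 * (21 / t) ^ 32" using t0 by simp
    ultimately show ?thesis unfolding K1 by simp
  qed
  have c1: "real (card {M \<in> GL2 n. \<exists>C. approximates n m eps C M \<and> length C \<le> D}) \<le> Z ^ (N * D)"
    unfolding Z_def N_def by (rule B2_bound[OF t0 t1 es n]) (use ND in \<open>simp add: N_def\<close>)
  have fin: "finite {M \<in> GL2 n. \<exists>C. approximates n m eps C M \<and> length C \<le> D}"
    by (rule finite_subset[OF _ carrier_mat_bit_finite[of n n]]) (auto simp: GL2_def)
  have logZ: "log 2 Z = K1 + 66 * lN"
  proof -
    have p1: "0 < 4 * (21 / t) ^ 32" using t0 by simp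
    have p2: "0 < real N ^ 66" using N2 by simp
    have "log 2 Z = log 2 (4 * (21 / t) ^ 32) + log 2 (real N ^ 66)" unfolding Z_def using p1 p2 by (simp add: log_mult)
    also have "log 2 (real N ^ 66) = 66 * lN" unfolding lN_def using N2 by (simp add: log_nat_power)
    finally show ?thesis unfolding K1 .
  qed
  have "Z ^ (N * D) = 2 powr (real (N * D) * log 2 Z)"
  proof -
    have "Z ^ (N * D) = Z powr real (N * D)" using Z1 by (intro powr_realpow[symmetric]) simp
    also have "\<dots> = (2 powr log 2 Z) powr real (N * D)" using Z1 by simp
    also have "\<dots> = 2 powr (real (N * D) * log 2 Z)" by (simp add: powr_powr mult.commute)
    finally show ?thesis .
  qed
  also have "\<dots> \<le> 2 powr (real n ^ 2 / 8)"
  proof -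
    have "log 2 Z \<le> (K1 + 66) * lN" unfolding logZ using K10 lN1 by (simp add: algebra_simps mult_le_cancel_left1)
    then have "real (N * D) * log 2 Z \<le> real (N * D) * ((K1 + 66) * lN)" by (rule mult_left_mono) simp
    also have "\<dots> \<le> c * real n ^ 2 / lN * ((K1 + 66) * lN)"
      by (rule mult_right_mono[OF NDx]) (use K10 lN1 in simp)
    also have "\<dots> = c * (K1 + 66) * real n ^ 2" using lN1 by (simp add: field_simps)
    also have "\<dots> \<le> 1 / 8 * real n ^ 2" by (rule mult_right_mono[OF cK]) simp
    finally show ?thesis by simp
  qed
  finally have "Z ^ (N * D) \<le> 2 powr (real n ^ 2 / 8)" .
  moreover have "card {M \<in> GL2 n. \<exists>C. approximates n m eps C M \<and>
      real (length C) < c * (real n ^ 2 / (real (n + m) * log 2 (real (n + m))))}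
    \<le> card {M \<in> GL2 n. \<exists>C. approximates n m eps C M \<and> length C \<le> D}" by (rule card_mono[OF fin sub])
  ultimately show ?thesis using c1 by (meson of_nat_le_iff order_trans)
qed


theorem theorem2:
  fixes eps :: real
  assumes "0 < eps" and "eps < sqrt 2 / 2"
  shows "\<exists>c>0. \<forall>m :: nat \<Rightarrow> nat.
    (\<lambda>n. real (card {M \<in> GL2 n. \<forall>C. approximates n (m n) eps C M \<longrightarrow>
          real (depth C) \<ge> c * max (log 2 (real n))
             ((real n)\<^sup>2 / (real (n + m n) * log 2 (real (n + m n))))})
        / real (card (GL2 n))) \<longlonglongrightarrow> 1"
proof -
  define \<eta> where "\<eta> = sqrt 2 / 2 - eps"
  define t where "t = min 1 (\<eta> / 3)"
  define K1 where "K1 = log 2 (4 * (21 / t) ^ 32)"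
  define c where "c = min (1 / 4) (1 / (8 * (K1 + 66)))"
  have eta0: "\<eta> > 0" unfolding \<eta>_def using assms by simp
  have t0: "0 < t" unfolding t_def using eta0 by simp
  have t1: "t \<le> 1" unfolding t_def by simp
  have es: "2 * eps + 2 * (3 * t) \<le> sqrt 2"
  proof -
    have "3 * t \<le> \<eta>" unfolding t_def by linarith
    then show ?thesis unfolding \<eta>_def by linarith
  qed
  have K10: "K1 \<ge> 0"
  proof -
    have "(1::real) \<le> 21 / t" using t0 t1 by (simp add: le_divide_eq)
    then have "1 \<le> (21 / t) ^ 32" by (simp add: one_le_power)
    then have "1 \<le> 4 * (21 / t) ^ 32" by linarith
    moreover have "0 < 4 * (21 / t) ^ 32" using t0 by simp
    ultimately show ?thesis unfolding K1_def by simp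
  qed
  have c0: "0 < c" unfolding c_def using K10 by simp
  have c4: "c \<le> 1 / 4" unfolding c_def by simp
  have cK: "c * (K1 + 66) \<le> 1 / 8"
  proof -
    have "c \<le> 1 / (8 * (K1 + 66))" unfolding c_def by simp
    then have "c * (K1 + 66) \<le> 1 / (8 * (K1 + 66)) * (K1 + 66)" using K10 by (intro mult_right_mono) auto
    also have "\<dots> = 1 / 8" using K10 by simp
    finally show ?thesis .
  qed
  show ?thesis
  proof (intro exI conjI allI)
    show "0 < c" by (rule c0)
    fix m :: "nat \<Rightarrow> nat"
    define f where "f n = real (card {M \<in> GL2 n. \<forall>C. approximates n (m n) eps C M \<longrightarrow>
          real (depth C) \<ge> c * max (log 2 (real n))
             ((real n)\<^sup>2 / (real (n + m n) * log 2 (real (n + m n))))}) / real (card (GL2 n))" for n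
    define g where "g n = (real n + 1) powr (sqrt (real n) * real n) / 2 powr ((real n ^ 2 - 1) / 4)
       + 2 powr (real n ^ 2 / 8) / 2 powr ((real n ^ 2 - 1) / 4)" for n :: nat
    have g0: "g \<longlonglongrightarrow> 0"
    proof -
      have "(\<lambda>n::nat. (real n + 1) powr (sqrt (real n) * real n) / 2 powr ((real n ^ 2 - 1) / 4)) \<longlonglongrightarrow> 0"
        by real_asymp
      moreover have "(\<lambda>n::nat. 2 powr (real n ^ 2 / 8) / 2 powr ((real n ^ 2 - 1) / 4)) \<longlonglongrightarrow> 0"
        by real_asymp
      ultimately show ?thesis unfolding g_def using tendsto_add by fastforce
    qed
    have bounds: "1 - g n \<le> f n \<and> f n \<le> 1" if n: "n \<ge> 2" for n
    proof -
      define N where "N = n + m n"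
      define Good where "Good = {M \<in> GL2 n. \<forall>C. approximates n (m n) eps C M \<longrightarrow>
          real (depth C) \<ge> c * max (log 2 (real n))
             ((real n)\<^sup>2 / (real (n + m n) * log 2 (real (n + m n))))}"
      define B1 where "B1 = {M \<in> GL2 n. \<exists>C. approximates n (m n) eps C M \<and> real (length C) < c * log 2 (real n)}"
      define B2 where "B2 = {M \<in> GL2 n. \<exists>C. approximates n (m n) eps C M \<and>
          real (length C) < c * (real n ^ 2 / (real (n + m n) * log 2 (real (n + m n))))}"
      have finGL: "finite (GL2 n)"
        by (rule finite_subset[OF _ carrier_mat_bit_finite[of n n]]) (auto simp: GL2_def)
      have cover: "GL2 n \<subseteq> Good \<union> B1 \<union> B2"
      proof
        fix M assume M: "M \<in> GL2 n"
        show "M \<in> Good \<union> B1 \<union> B2"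
        proof (cases "M \<in> Good")
          case False
          then obtain C where ap: "approximates n (m n) eps C M" and
            lt: "\<not> real (depth C) \<ge> c * max (log 2 (real n)) ((real n)\<^sup>2 / (real (n + m n) * log 2 (real (n + m n))))"
            using M unfolding Good_def by blast
          have "real (length C) < c * log 2 (real n) \<or>
              real (length C) < c * (real n ^ 2 / (real (n + m n) * log 2 (real (n + m n))))"
            using lt c0 unfolding depth_def by (auto simp: max_def split: if_splits)
          then show ?thesis using M ap unfolding B1_def B2_def by blast
        qed simp
      qed
      have fG: "finite Good" "finite B1" "finite B2" using finGL unfolding Good_def B1_def B2_def by auto
      have "card (GL2 n) \<le> card (Good \<union> B1 \<union> B2)" by (rule card_mono[OF _ cover]) (use fG in simp)
      also have "\<dots> \<le> card Good + card B1 + card B2" by (meson card_Un_le add_le_mono1 order_trans)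
      finally have cG: "real (card (GL2 n)) \<le> real (card Good) + real (card B1) + real (card B2)" by linarith
      have GL: "real (card (GL2 n)) \<ge> 2 powr ((real n ^ 2 - 1) / 4)" by (rule GL_lower_real)
      have Gp: "real (card (GL2 n)) > 0"
      proof -
        have "(0::real) < 2 powr ((real n ^ 2 - 1) / 4)" by simp
        then show ?thesis using GL by linarith
      qed
      have b1: "real (card B1) \<le> (real n + 1) powr (sqrt (real n) * real n)"
        unfolding B1_def by (rule B1_bound[OF assms(2) c4]) (use n in simp)
      have b2: "real (card B2) \<le> 2 powr (real n ^ 2 / 8)"
        unfolding B2_def by (rule B2_bound2[OF t0 t1 es K1_def c0 c4 cK n])
      have r1: "real (card B1) / real (card (GL2 n)) \<le> (real n + 1) powr (sqrt (real n) * real n) / 2 powr ((real n ^ 2 - 1) / 4)"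
        by (rule frac_le) (use b1 GL in auto)
      have r2: "real (card B2) / real (card (GL2 n)) \<le> 2 powr (real n ^ 2 / 8) / 2 powr ((real n ^ 2 - 1) / 4)"
        by (rule frac_le) (use b2 GL in auto)
      have fe: "f n = real (card Good) / real (card (GL2 n))" unfolding f_def Good_def ..
      have "1 - g n \<le> 1 - real (card B1) / real (card (GL2 n)) - real (card B2) / real (card (GL2 n))"
        using r1 r2 unfolding g_def by linarith
      also have "\<dots> = (real (card (GL2 n)) - real (card B1) - real (card B2)) / real (card (GL2 n))"
        using Gp by (simp add: field_simps)
      also have "\<dots> \<le> real (card Good) / real (card (GL2 n))"
        using cG Gp by (intro divide_right_mono) auto
      finally have lo: "1 - g n \<le> f n" unfolding fe .
      have "card Good \<le> card (GL2 n)" by (rule card_mono[OF finGL]) (auto simp: Good_def)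
      then have "f n \<le> 1" unfolding fe using Gp by simp
      then show ?thesis using lo by simp
    qed
    have lim1: "(\<lambda>n. 1 - g n) \<longlonglongrightarrow> 1"
      using tendsto_diff[OF tendsto_const[of 1] g0] by simp
    have "f \<longlonglongrightarrow> 1"
    proof (rule tendsto_sandwich[OF _ _ lim1 tendsto_const])
      show "\<forall>\<^sub>F n in sequentially. 1 - g n \<le> f n"
        using bounds by (intro eventually_sequentiallyI[of 2]) auto
      show "\<forall>\<^sub>F n in sequentially. f n \<le> 1"
        using bounds by (intro eventually_sequentiallyI[of 2]) auto
    qed
    then show "(\<lambda>n. real (card {M \<in> GL2 n. \<forall>C. approximates n (m n) eps C M \<longrightarrow>
          real (depth C) \<ge> c * max (log 2 (real n))
             ((real n)\<^sup>2 / (real (n + m n) * log 2 (real (n + m n))))})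
        / real (card (GL2 n))) \<longlonglongrightarrow> 1" unfolding f_def .
  qed
qed


end
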